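(* (1) For all $k=1,\dots,K$ and $m=1,\dots,M$, the random variables $H_k^r(m)^2-1$ and $H_k^i(m)^2-1$ are sub-exponential and $$\|H_k^r(m)^2-1\|_{\psi},\ \|H_k^i(m)^2-1\|_{\psi}\le2\sigma_F^2.$$ (2) For every $s^K=(s_1,\dots,s_K)\in\mathcal{S}_1\times\dots\times\mathcal{S}_K$ and every $m=1,\dots,M$, the random variable $\bar N_{s^K}(m)$ is sub-exponential and $$\|\bar N_{s^K}(m)-\mathbb{E}(\bar N_{s^K}(m))\|_\psi\le6\sigma_F^2\Delta(f\|P)+8\sigma_N\sigma_F\sqrt{\Delta(f\|P)}+4\sigma_N^2.$$
   Context: Norms: for a real random variable $X$, the sub-gaussian norm is $\tau(X):=\inf\{t>0:\forall\lambda\in\mathbb{R},\ \mathbb{E}\exp(\lambda(X-\mathbb{E}X))\le\exp(\lambda^2t^2/2)\}$ and the sub-exponential norm is $\|X\|_\psi:=\sup_{k\ge1}\left(\mathbb{E}(|X|^k)/k!\right)^{1/k}$; $X$ is sub-exponential if $\|X\|_\psi<\infty$. Random variables: fix $K,M\in\mathbb{N}$, $P>0$, $\sigma_F,\sigma_N\ge0$. $H_k(m)$ ($k\le K$, $m\le M$) are independent complex random variables whose real parts $H_k^r(m)$ and imaginary parts $H_k^i(m)$ are independent sub-gaussian with mean $0$, variance $1$, and $\max(\tau(H_k^r(m)),\tau(H_k^i(m)))\le\sigma_F$. $N(m)$ ($m\le M$) are independent complex random variables whose real and imaginary parts $N^r(m),N^i(m)$ are independent sub-gaussian with mean $0$ and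 $\max(\tau(N^r(m)),\tau(N^i(m)))\le\sigma_N$. All $N(m)$, $H_k(m)$ are jointly independent. $U_k(m)$ ($k\le K$, $m\le M$) are i.i.d. uniform on $\{-1,+1\}$, independent of all $H_k(m)$ and $N(m)$. Function data: $\mathcal{S}_1,\dots,\mathcal{S}_K\subseteq\mathbb{R}$ are closed sets and $f_k:\mathcal{S}_k\to\mathbb{R}$ are bounded measurable functions (the inner functions of $f$). Let $\phi_{\min,k}=\inf_{s\in\mathcal{S}_k}f_k(s)$, $\phi_{\max,k}=\sup_{s\in\mathcal{S}_k}f_k(s)$, $\bar\Delta(f)=\sum_{k=1}^K(\phi_{\max,k}-\phi_{\min,k})$, $\Delta(f)=\max_k(\phi_{\max,k}-\phi_{\min,k})$ (assumed positive), and the relative spread $\Delta(f\|P)=P\,\bar\Delta(f)/\Delta(f)$. Define $g_k:[\phi_{\min,k},\phi_{\max,k}]\to[0,P]$ by $g_k(t)=\frac{P}{\Delta(f)}(t-\phi_{\min,k})$. For $s^K=(s_1,\dots,s_K)$ and $m=1,\dots,M$ define $$\bar N_{s^K}(m):=\sum_{\substack{k,l=1\\k\ne l}}^K\sqrt{g_k(f_k(s_k))g_l(f_l(s_l))}\,H_k(m)\overline{H_l(m)}\,U_k(m)U_l(m)+2\,\mathrm{Re}\Big(\overline{N(m)}\sum_{k=1}^K\sqrt{g_k(f_k(s_k))}\,H_k(m)U_k(m)\Big)+|N(m)|^2.$$ *)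

theory Defs
  imports "HOL-Probability.Probability"
begin

definition subgauss_set :: "'a measure \<Rightarrow> ('a \<Rightarrow> real) \<Rightarrow> real set" where
  "subgauss_set Q X = {t. t > 0 \<and> (\<forall>l::real.
      integrable Q (\<lambda>x. exp (l * (X x - integral\<^sup>L Q X))) \<and>
      integral\<^sup>L Q (\<lambda>x. exp (l * (X x - integral\<^sup>L Q X))) \<le> exp (l\<^sup>2 * t\<^sup>2 / 2))}"

definition subgaussian :: "'a measure \<Rightarrow> ('a \<Rightarrow> real) \<Rightarrow> bool" where
  "subgaussian Q X \<longleftrightarrow> X \<in> borel_measurable Q \<and> subgauss_set Q X \<noteq> {}"

text \<open>Sub-gaussian norm tau(X) (meaningful when subgaussian Q X).\<close>
definition subgauss_norm :: "'a measure \<Rightarrow> ('a \<Rightarrow> real) \<Rightarrow> real" where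
  "subgauss_norm Q X = Inf (subgauss_set Q X)"

definition subexp_norm :: "'a measure \<Rightarrow> ('a \<Rightarrow> real) \<Rightarrow> ereal" where
  "subexp_norm Q X = (SUP k\<in>{1::nat..}.
      (if integrable Q (\<lambda>x. \<bar>X x\<bar> ^ k)
       then ereal ((integral\<^sup>L Q (\<lambda>x. \<bar>X x\<bar> ^ k) / fact k) powr (1 / real k))
       else \<infinity>))"

definition subexponential :: "'a measure \<Rightarrow> ('a \<Rightarrow> real) \<Rightarrow> bool" where
  "subexponential Q X \<longleftrightarrow> X \<in> borel_measurable Q \<and> subexp_norm Q X < \<infinity>"

definition phi_min :: "(nat \<Rightarrow> real set) \<Rightarrow> (nat \<Rightarrow> real \<Rightarrow> real) \<Rightarrow> nat \<Rightarrow> real" where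
  "phi_min S f k = Inf (f k ` S k)"

definition phi_max :: "(nat \<Rightarrow> real set) \<Rightarrow> (nat \<Rightarrow> real \<Rightarrow> real) \<Rightarrow> nat \<Rightarrow> real" where
  "phi_max S f k = Sup (f k ` S k)"

definition Delta_bar :: "nat \<Rightarrow> (nat \<Rightarrow> real set) \<Rightarrow> (nat \<Rightarrow> real \<Rightarrow> real) \<Rightarrow> real" where
  "Delta_bar K S f = (\<Sum>k=1..K. phi_max S f k - phi_min S f k)"

definition Delta :: "nat \<Rightarrow> (nat \<Rightarrow> real set) \<Rightarrow> (nat \<Rightarrow> real \<Rightarrow> real) \<Rightarrow> real" where
  "Delta K S f = Max ((\<lambda>k. phi_max S f k - phi_min S f k) ` {1..K})"

definition rel_spread :: "nat \<Rightarrow> (nat \<Rightarrow> real set) \<Rightarrow> (nat \<Rightarrow> real \<Rightarrow> real) \<Rightarrow> real \<Rightarrow> real" where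
  "rel_spread K S f P = P * Delta_bar K S f / Delta K S f"

definition gfun :: "nat \<Rightarrow> (nat \<Rightarrow> real set) \<Rightarrow> (nat \<Rightarrow> real \<Rightarrow> real) \<Rightarrow> real \<Rightarrow> nat \<Rightarrow> real \<Rightarrow> real" where
  "gfun K S f P k t = P / Delta K S f * (t - phi_min S f k)"

definition Hc :: "(nat \<Rightarrow> nat \<Rightarrow> 'a \<Rightarrow> real) \<Rightarrow> (nat \<Rightarrow> nat \<Rightarrow> 'a \<Rightarrow> real) \<Rightarrow> nat \<Rightarrow> nat \<Rightarrow> 'a \<Rightarrow> complex" where
  "Hc Hr Hi k m x = Complex (Hr k m x) (Hi k m x)"

definition Nc :: "(nat \<Rightarrow> 'a \<Rightarrow> real) \<Rightarrow> (nat \<Rightarrow> 'a \<Rightarrow> real) \<Rightarrow> nat \<Rightarrow> 'a \<Rightarrow> complex" where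
  "Nc Nr Ni m x = Complex (Nr m x) (Ni m x)"

text \<open>The effective noise bar N_{s^K}(m) (complex-valued as in the paper; it is in fact real).\<close>
definition Nbar :: "nat \<Rightarrow> (nat \<Rightarrow> real set) \<Rightarrow> (nat \<Rightarrow> real \<Rightarrow> real) \<Rightarrow> real \<Rightarrow>
    (nat \<Rightarrow> nat \<Rightarrow> 'a \<Rightarrow> real) \<Rightarrow> (nat \<Rightarrow> nat \<Rightarrow> 'a \<Rightarrow> real) \<Rightarrow>
    (nat \<Rightarrow> 'a \<Rightarrow> real) \<Rightarrow> (nat \<Rightarrow> 'a \<Rightarrow> real) \<Rightarrow> (nat \<Rightarrow> nat \<Rightarrow> 'a \<Rightarrow> real) \<Rightarrow>
    (nat \<Rightarrow> real) \<Rightarrow> nat \<Rightarrow> 'a \<Rightarrow> complex" where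
  "Nbar K S f P Hr Hi Nr Ni U s m x =
     (\<Sum>k\<in>{1..K}. \<Sum>l\<in>{1..K}-{k}.
        complex_of_real (sqrt (gfun K S f P k (f k (s k)) * gfun K S f P l (f l (s l))))
        * Hc Hr Hi k m x * cnj (Hc Hr Hi l m x) * complex_of_real (U k m x * U l m x))
   + complex_of_real (2 * Re (cnj (Nc Nr Ni m x) *
        (\<Sum>k=1..K. complex_of_real (sqrt (gfun K S f P k (f k (s k)))) * Hc Hr Hi k m x
                     * complex_of_real (U k m x))))
   + complex_of_real ((cmod (Nc Nr Ni m x))\<^sup>2)"

datatype rv_idx = IHr nat nat | IHi nat nat | INr nat | INi nat | IU nat nat

fun rv_family :: "(nat \<Rightarrow> nat \<Rightarrow> 'a \<Rightarrow> real) \<Rightarrow> (nat \<Rightarrow> nat \<Rightarrow> 'a \<Rightarrow> real) \<Rightarrow>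
    (nat \<Rightarrow> 'a \<Rightarrow> real) \<Rightarrow> (nat \<Rightarrow> 'a \<Rightarrow> real) \<Rightarrow> (nat \<Rightarrow> nat \<Rightarrow> 'a \<Rightarrow> real) \<Rightarrow>
    rv_idx \<Rightarrow> 'a \<Rightarrow> real" where
  "rv_family Hr Hi Nr Ni U (IHr k m) = Hr k m"
| "rv_family Hr Hi Nr Ni U (IHi k m) = Hi k m"
| "rv_family Hr Hi Nr Ni U (INr m) = Nr m"
| "rv_family Hr Hi Nr Ni U (INi m) = Ni m"
| "rv_family Hr Hi Nr Ni U (IU k m) = U k m"

definition rv_index :: "nat \<Rightarrow> nat \<Rightarrow> rv_idx set" where
  "rv_index K M = {IHr k m | k m. k \<in> {1..K} \<and> m \<in> {1..M}}
     \<union> {IHi k m | k m. k \<in> {1..K} \<and> m \<in> {1..M}}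
     \<union> {INr m | m. m \<in> {1..M}} \<union> {INi m | m. m \<in> {1..M}}
     \<union> {IU k m | k m. k \<in> {1..K} \<and> m \<in> {1..M}}"

end

theory Submission
  imports Defs
begin

lemma gauss_mgf:
  fixes s w :: real assumes s: "s > 0"
  shows "has_bochner_integral lborel (\<lambda>x. normal_density 0 s x * exp (x * w)) (exp (s\<^sup>2 * w\<^sup>2 / 2))"
proof -
  have eq: "normal_density 0 s x * exp (x * w) = exp (s\<^sup>2 * w\<^sup>2 / 2) * normal_density (s\<^sup>2 * w) s x" for x
  proof -
    have "- (x - 0)\<^sup>2 / (2 * s\<^sup>2) + x * w = s\<^sup>2 * w\<^sup>2 / 2 + - (x - s\<^sup>2 * w)\<^sup>2 / (2 * s\<^sup>2)"
      using s by (simp add: field_simps power2_eq_square)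
    then have "exp (- (x - 0)\<^sup>2 / (2 * s\<^sup>2)) * exp (x * w) = exp (s\<^sup>2 * w\<^sup>2 / 2) * exp (- (x - s\<^sup>2 * w)\<^sup>2 / (2 * s\<^sup>2))"
      by (simp add: exp_add[symmetric])
    then show ?thesis unfolding normal_density_def by (simp add: algebra_simps)
  qed
  have "has_bochner_integral lborel (\<lambda>x. exp (s\<^sup>2 * w\<^sup>2 / 2) * normal_density (s\<^sup>2 * w) s x) (exp (s\<^sup>2 * w\<^sup>2 / 2) * 1)"
    by (intro has_bochner_integral_mult_right) (simp add: has_bochner_integral_iff integrable_normal_density[OF s] integral_normal_density[OF s])
  then show ?thesis by (simp add: eq)
qed

lemma gauss_sq:
  fixes s t :: real assumes s: "s > 0" and st: "s\<^sup>2 * t\<^sup>2 < 1"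
  shows "has_bochner_integral lborel (\<lambda>x. normal_density 0 s x * exp (x\<^sup>2 * t\<^sup>2 / 2)) (1 / sqrt (1 - s\<^sup>2 * t\<^sup>2))"
proof -
  define a where "a = 1 - s\<^sup>2 * t\<^sup>2"
  have a: "a > 0" using st by (simp add: a_def)
  define s' where "s' = s / sqrt a"
  have s': "s' > 0" using s a by (simp add: s'_def)
  have s'2: "s'\<^sup>2 = s\<^sup>2 / a" using a by (simp add: s'_def power_divide)
  have eq: "normal_density 0 s x * exp (x\<^sup>2 * t\<^sup>2 / 2) = (1 / sqrt a) * normal_density 0 s' x" for x
  proof -
    have e1: "- (x - 0)\<^sup>2 / (2 * s\<^sup>2) + x\<^sup>2 * t\<^sup>2 / 2 = - (x - 0)\<^sup>2 / (2 * s'\<^sup>2)"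
      using s a unfolding s'2 a_def by (simp add: field_simps)
    have e2: "1 / sqrt (2 * pi * s'\<^sup>2) = sqrt a / sqrt (2 * pi * s\<^sup>2)"
      using s a unfolding s'2 by (simp add: real_sqrt_divide real_sqrt_mult field_simps)
    have e3: "exp (- (x - 0)\<^sup>2 / (2 * s\<^sup>2)) * exp (x\<^sup>2 * t\<^sup>2 / 2) = exp (- (x - 0)\<^sup>2 / (2 * s'\<^sup>2))"
      by (subst mult_exp_exp) (rule arg_cong[where f=exp], rule e1)
    have "normal_density 0 s x * exp (x\<^sup>2 * t\<^sup>2 / 2) = 1 / sqrt (2 * pi * s\<^sup>2) * exp (- (x - 0)\<^sup>2 / (2 * s'\<^sup>2))"
      unfolding normal_density_def e3[symmetric] by (simp only: mult.assoc)
    also have "\<dots> = (1 / sqrt a) * normal_density 0 s' x"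
      unfolding normal_density_def e2 using a by simp
    finally show ?thesis .
  qed
  have "has_bochner_integral lborel (\<lambda>x. (1 / sqrt a) * normal_density 0 s' x) ((1 / sqrt a) * 1)"
    by (intro has_bochner_integral_mult_right) (simp add: has_bochner_integral_iff integrable_normal_density[OF s'] integral_normal_density[OF s'])
  then show ?thesis by (simp add: eq a_def)
qed

definition mgf_bd :: "'a measure \<Rightarrow> ('a \<Rightarrow> real) \<Rightarrow> real \<Rightarrow> bool" where
  "mgf_bd Q W t \<longleftrightarrow> W \<in> borel_measurable Q \<and>
     (\<forall>l. integrable Q (\<lambda>x. exp (l * W x)) \<and> (\<integral>x. exp (l * W x) \<partial>Q) \<le> exp (l\<^sup>2 * t\<^sup>2 / 2))"

lemma gauss_trick:
  assumes Q: "prob_space Q" and W: "mgf_bd Q W t" and th: "0 < \<theta>" and tt: "2 * \<theta> * t\<^sup>2 < 1"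
  shows "integrable Q (\<lambda>x. exp (\<theta> * (W x)\<^sup>2)) \<and> (\<integral>x. exp (\<theta> * (W x)\<^sup>2) \<partial>Q) \<le> 1 / sqrt (1 - 2 * \<theta> * t\<^sup>2)"
proof -
  interpret prob_space Q by (rule Q)
  have Wm[measurable]: "W \<in> borel_measurable Q" using W by (simp add: mgf_bd_def)
  define s where "s = sqrt (2 * \<theta>)"
  have s: "s > 0" using th by (simp add: s_def)
  have s2: "s\<^sup>2 = 2 * \<theta>" using th by (simp add: s_def)
  have st: "s\<^sup>2 * t\<^sup>2 < 1" using tt s2 by simp
  interpret pair_sigma_finite Q lborel
    by (simp add: pair_sigma_finite_def prob_space_imp_sigma_finite Q lborel.sigma_finite_measure_axioms)
  have inner1: "(\<integral>\<^sup>+y. ennreal (normal_density 0 s y * exp (y * W x)) \<partial>lborel) = ennreal (exp (\<theta> * (W x)\<^sup>2))" for x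
  proof -
    have h: "has_bochner_integral lborel (\<lambda>y. normal_density 0 s y * exp (y * W x)) (exp (s\<^sup>2 * (W x)\<^sup>2 / 2))"
      by (rule gauss_mgf[OF s])
    have "(\<integral>\<^sup>+y. ennreal (normal_density 0 s y * exp (y * W x)) \<partial>lborel) = ennreal (exp (s\<^sup>2 * (W x)\<^sup>2 / 2))"
      using h by (subst nn_integral_eq_integral) (auto simp: has_bochner_integral_iff)
    then show ?thesis using s2 by simp
  qed
  have inner2: "(\<integral>\<^sup>+x. ennreal (normal_density 0 s y * exp (y * W x)) \<partial>Q) \<le> ennreal (normal_density 0 s y * exp (y\<^sup>2 * t\<^sup>2 / 2))" for y
  proof -
    have i: "integrable Q (\<lambda>x. exp (y * W x))" and b: "(\<integral>x. exp (y * W x) \<partial>Q) \<le> exp (y\<^sup>2 * t\<^sup>2 / 2)"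
      using W by (auto simp: mgf_bd_def)
    have "(\<integral>\<^sup>+x. ennreal (normal_density 0 s y * exp (y * W x)) \<partial>Q) = ennreal (\<integral>x. normal_density 0 s y * exp (y * W x) \<partial>Q)"
      using i by (intro nn_integral_eq_integral) auto
    also have "\<dots> = ennreal (normal_density 0 s y * (\<integral>x. exp (y * W x) \<partial>Q))" by simp
    also have "\<dots> \<le> ennreal (normal_density 0 s y * exp (y\<^sup>2 * t\<^sup>2 / 2))"
      using b by (intro ennreal_leI mult_left_mono) auto
    finally show ?thesis .
  qed
  have "(\<integral>\<^sup>+x. ennreal (exp (\<theta> * (W x)\<^sup>2)) \<partial>Q) = (\<integral>\<^sup>+x. (\<integral>\<^sup>+y. ennreal (normal_density 0 s y * exp (y * W x)) \<partial>lborel) \<partial>Q)"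
    by (simp add: inner1)
  also have "\<dots> = (\<integral>\<^sup>+y. (\<integral>\<^sup>+x. ennreal (normal_density 0 s y * exp (y * W x)) \<partial>Q) \<partial>lborel)"
    by (rule Fubini'[symmetric]) measurable
  also have "\<dots> \<le> (\<integral>\<^sup>+y. ennreal (normal_density 0 s y * exp (y\<^sup>2 * t\<^sup>2 / 2)) \<partial>lborel)"
    by (intro nn_integral_mono inner2)
  also have "\<dots> = ennreal (1 / sqrt (1 - s\<^sup>2 * t\<^sup>2))"
    using gauss_sq[OF s st] by (subst nn_integral_eq_integral) (auto simp: has_bochner_integral_iff)
  finally have le: "(\<integral>\<^sup>+x. ennreal (exp (\<theta> * (W x)\<^sup>2)) \<partial>Q) \<le> ennreal (1 / sqrt (1 - 2 * \<theta> * t\<^sup>2))"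
    using s2 by (simp add: mult.assoc)
  have int: "integrable Q (\<lambda>x. exp (\<theta> * (W x)\<^sup>2))"
    using le by (intro integrableI_nonneg) (auto simp: top_unique intro: le_less_trans)
  moreover have "(\<integral>x. exp (\<theta> * (W x)\<^sup>2) \<partial>Q) \<le> 1 / sqrt (1 - 2 * \<theta> * t\<^sup>2)"
  proof -
    have "ennreal (\<integral>x. exp (\<theta> * (W x)\<^sup>2) \<partial>Q) = (\<integral>\<^sup>+x. ennreal (exp (\<theta> * (W x)\<^sup>2)) \<partial>Q)"
      using int by (intro nn_integral_eq_integral[symmetric]) auto
    with le have "ennreal (\<integral>x. exp (\<theta> * (W x)\<^sup>2) \<partial>Q) \<le> ennreal (1 / sqrt (1 - 2 * \<theta> * t\<^sup>2))" by simp
    then show ?thesis using tt by (subst (asm) ennreal_le_iff) auto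
  qed
  ultimately show ?thesis by blast
qed

lemma pow_exp_le:
  fixes u :: real assumes u: "u \<ge> 0"
  shows "u ^ p * exp (- u) \<le> (real p / exp 1) ^ p"
proof (cases "p = 0 \<or> u = 0")
  case True then show ?thesis using u by (auto simp: power_0_left)
next
  case False
  then have p: "p > 0" and u': "u > 0" using u by auto
  have "ln (u / p) \<le> u / p - 1" using u' p by (intro ln_le_minus_one) auto
  then have "p * ln (u / p) \<le> p * (u / p - 1)" using p by (intro mult_left_mono) auto
  moreover have "p * ln (u / p) = p * ln u - p * ln p" using u' p by (simp add: ln_div algebra_simps)
  moreover have "p * (u / p - 1) = u - p" using p by (simp add: field_simps)
  ultimately have "p * ln u - u \<le> p * ln p - p" by linarith
  then have "exp (p * ln u - u) \<le> exp (p * ln p - p)" by simp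
  moreover have "exp (p * ln u - u) = u ^ p * exp (- u)"
  proof -
    have "exp (p * ln u) = u ^ p" using u' by (simp add: exp_of_nat_mult)
    then show ?thesis by (simp add: exp_diff exp_minus field_simps)
  qed
  moreover have "exp (p * ln p - p) = (real p / exp 1) ^ p"
  proof -
    have "exp (p * ln p) = real p ^ p" using p by (simp add: exp_of_nat_mult)
    moreover have "exp (real p) = exp 1 ^ p" by (simp add: exp_of_nat_mult[symmetric])
    ultimately show ?thesis by (simp add: exp_diff power_divide)
  qed
  ultimately show ?thesis by simp
qed

definition Mq :: "nat \<Rightarrow> real" where
  "Mq q = (real q / exp 1) ^ q + (real (q - 1) / exp 1) ^ (q - 1)"

lemma Mq_bound:
  fixes u :: real assumes u: "u \<ge> 0" and q: "q \<ge> 1"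
  shows "u ^ q \<le> Mq q * (exp u - 1)"
proof (cases "u = 0")
  case True then show ?thesis using q by (simp add: power_0_left)
next
  case False
  then have u': "u > 0" using u by simp
  have "u ^ (q - 1) * exp (- u) + u ^ q * exp (- u) \<le> Mq q"
    unfolding Mq_def using pow_exp_le[OF u, of q] pow_exp_le[OF u, of "q - 1"] by simp
  then have A: "(u ^ (q - 1) + u ^ q) * exp (- u) \<le> Mq q" by (simp add: algebra_simps)
  have uq: "u ^ q = u * u ^ (q - 1)" using q by (simp add: power_eq_if)
  have B: "u * exp u \<le> (1 + u) * (exp u - 1)"
    using exp_ge_add_one_self[of u] by (simp add: algebra_simps)
  have Mpos: "Mq q \<ge> 0" unfolding Mq_def by simp
  have "u ^ q * (1 + u) * exp (- u) \<le> u * Mq q"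
    using mult_left_mono[OF A, of u] u by (simp add: uq algebra_simps)
  then have "u ^ q * (1 + u) \<le> u * Mq q * exp u"
    by (simp add: exp_minus field_simps)
  also have "\<dots> \<le> Mq q * ((1 + u) * (exp u - 1))"
    using mult_left_mono[OF B Mpos] by (simp add: algebra_simps)
  finally have "u ^ q * (1 + u) \<le> Mq q * (exp u - 1) * (1 + u)" by (simp add: algebra_simps)
  then show ?thesis using u by simp
qed

lemma moment_from_mgf:
  assumes Q: "prob_space Q" and W: "mgf_bd Q W t" and t: "t > 0" and q: "q \<ge> 1"
    and r: "0 < r" "r < 1"
  shows "integrable Q (\<lambda>x. (W x) ^ (2 * q)) \<and>
         (r / (2 * t\<^sup>2)) ^ q * (\<integral>x. (W x) ^ (2 * q) \<partial>Q) \<le> Mq q * (1 / sqrt (1 - r) - 1)"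
proof -
  interpret prob_space Q by (rule Q)
  have Wm[measurable]: "W \<in> borel_measurable Q" using W by (simp add: mgf_bd_def)
  define \<theta> where "\<theta> = r / (2 * t\<^sup>2)"
  have th: "\<theta> > 0" using r t by (simp add: \<theta>_def)
  have tt: "2 * \<theta> * t\<^sup>2 = r" using t by (simp add: \<theta>_def)
  from gauss_trick[OF Q W th] tt r
  have I: "integrable Q (\<lambda>x. exp (\<theta> * (W x)\<^sup>2))" and B: "(\<integral>x. exp (\<theta> * (W x)\<^sup>2) \<partial>Q) \<le> 1 / sqrt (1 - r)"
    by auto
  have pw: "(\<theta> * (W x)\<^sup>2) ^ q \<le> Mq q * (exp (\<theta> * (W x)\<^sup>2) - 1)" for x
    using th q by (intro Mq_bound) auto
  have pw2: "(W x) ^ (2 * q) = (\<theta> * (W x)\<^sup>2) ^ q / \<theta> ^ q" for x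
    using th by (simp add: power_mult_distrib power_mult)
  have I2: "integrable Q (\<lambda>x. Mq q * (exp (\<theta> * (W x)\<^sup>2) - 1))"
    using I by auto
  have int: "integrable Q (\<lambda>x. (\<theta> * (W x)\<^sup>2) ^ q)"
  proof (rule Bochner_Integration.integrable_bound[OF I2])
    show "(\<lambda>x. (\<theta> * (W x)\<^sup>2) ^ q) \<in> borel_measurable Q" by measurable
    show "AE x in Q. norm ((\<theta> * (W x)\<^sup>2) ^ q) \<le> norm (Mq q * (exp (\<theta> * (W x)\<^sup>2) - 1))"
      using pw th by (auto intro!: order.trans[OF _ abs_ge_self])
  qed
  have int2: "integrable Q (\<lambda>x. (W x) ^ (2 * q))"
    unfolding pw2 using int by auto
  have "(\<integral>x. (\<theta> * (W x)\<^sup>2) ^ q \<partial>Q) \<le> (\<integral>x. Mq q * (exp (\<theta> * (W x)\<^sup>2) - 1) \<partial>Q)"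
    by (intro integral_mono int I2 pw)
  also have "\<dots> = Mq q * ((\<integral>x. exp (\<theta> * (W x)\<^sup>2) \<partial>Q) - 1)"
    using I by (simp add: prob_space)
  also have "\<dots> \<le> Mq q * (1 / sqrt (1 - r) - 1)"
    using B by (intro mult_left_mono) (auto simp: Mq_def)
  finally have "(\<integral>x. (\<theta> * (W x)\<^sup>2) ^ q \<partial>Q) \<le> Mq q * (1 / sqrt (1 - r) - 1)" .
  moreover have "(\<integral>x. (\<theta> * (W x)\<^sup>2) ^ q \<partial>Q) = \<theta> ^ q * (\<integral>x. (W x) ^ (2 * q) \<partial>Q)"
    by (simp add: power_mult_distrib power_mult)
  ultimately show ?thesis using int2 by (simp add: \<theta>_def)
qed

lemma e_ge: "exp (1::real) \<ge> 27 / 10"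
proof -
  have s: "(\<lambda>n. 1 ^ n /\<^sub>R fact n) sums exp (1::real)" by (rule exp_converges)
  have "(\<Sum>n\<in>{..<6}. (1::real) ^ n /\<^sub>R fact n) \<le> (\<Sum>n. 1 ^ n /\<^sub>R fact n)"
    using s by (intro sum_le_suminf) (auto simp: sums_iff)
  also have "\<dots> = exp 1" using s by (simp add: sums_iff)
  finally have "(\<Sum>n\<in>{..<6}. (1::real) ^ n /\<^sub>R fact n) \<le> exp 1" .
  moreover have "(\<Sum>n\<in>{..<6}. (1::real) ^ n /\<^sub>R fact n) = 1 + 1 + 1/2 + 1/6 + 1/24 + 1/120"
    by (simp add: lessThan_nat_numeral fact_numeral)
  ultimately show ?thesis by simp
qed

lemma e_le: "exp (1::real) \<le> 272 / 100"
  using e_less_272 by simp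

lemma ln_mid:
  fixes m :: real assumes m: "m \<ge> 1"
  shows "(m + 1/2) * ln (m + 1/2) - (m - 1/2) * ln (m - 1/2) \<le> ln m + 1"
proof -
  define h where "h \<tau> = (m + \<tau>) * ln (m + \<tau>) - (m - \<tau>) * ln (m - \<tau>) - 2 * \<tau> * (ln m + 1)" for \<tau>
  have "h (1/2) \<le> h 0"
  proof (rule DERIV_nonpos_imp_nonincreasing[of 0 "1/2" h])
    fix x :: real assume x: "0 \<le> x" "x \<le> 1/2"
    have p1: "m + x > 0" "m - x > 0" using m x by auto
    have d1: "((\<lambda>\<tau>. (m + \<tau>) * ln (m + \<tau>)) has_real_derivative (ln (m + x) + 1)) (at x)"
      using p1 by (auto intro!: derivative_eq_intros)
    have d2: "((\<lambda>\<tau>. (m - \<tau>) * ln (m - \<tau>)) has_real_derivative (- ln (m - x) - 1)) (at x)"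
      using p1 by (auto intro!: derivative_eq_intros)
    have d3: "((\<lambda>\<tau>. 2 * \<tau> * (ln m + 1)) has_real_derivative (2 * (ln m + 1))) (at x)"
      by (auto intro!: derivative_eq_intros)
    have d: "(h has_real_derivative (ln (m + x) + ln (m - x) - 2 * ln m)) (at x)"
      unfolding h_def[abs_def] using DERIV_diff[OF DERIV_diff[OF d1 d2] d3] by (simp add: algebra_simps)
    have "ln (m + x) + ln (m - x) = ln ((m + x) * (m - x))" using p1 by (simp add: ln_mult)
    also have "\<dots> \<le> ln (m * m)"
    proof -
      have "(m + x) * (m - x) > 0" using p1 by simp
      moreover have "(m + x) * (m - x) \<le> m * m" by (simp add: algebra_simps)
      ultimately show ?thesis by simp
    qed
    also have "\<dots> = 2 * ln m" using m by (simp add: ln_mult)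
    finally show "\<exists>y. (h has_real_derivative y) (at x) \<and> y \<le> 0"
      using d by (intro exI[of _ "ln (m + x) + ln (m - x) - 2 * ln m"]) auto
  qed simp
  then show ?thesis by (simp add: h_def)
qed

lemma ln_fact_mid:
  "ln (fact q) \<ge> (real q + 1/2) * ln (real q + 1/2) - real q + ln 2 / 2"
proof (induction q)
  case 0
  have "(1/2::real) * ln (1/2) + ln 2 / 2 = 0" by (simp add: ln_div)
  then show ?case by simp
next
  case (Suc q)
  have m: "real q + 1 \<ge> 1" by simp
  from ln_mid[OF m]
  have L: "(real q + 3/2) * ln (real q + 3/2) - (real q + 1/2) * ln (real q + 1/2) \<le> ln (real q + 1) + 1"
    by (simp add: algebra_simps)
  have "ln (fact (Suc q)) = ln (real q + 1) + ln (fact q)"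
    by (simp add: ln_mult add.commute)
  then show ?case using Suc.IH L by (simp add: algebra_simps)
qed

lemma fact_mid:
  "fact q \<ge> ((real q + 1/2) / exp 1) ^ q * sqrt (2 * real q + 1)"
proof -
  define x where "x = real q + 1/2"
  have x: "x > 0" by (simp add: x_def)
  have "exp ((real q + 1/2) * ln (real q + 1/2) - real q + ln 2 / 2) \<le> exp (ln (fact q))"
    by (simp only: exp_le_cancel_iff) (rule ln_fact_mid)
  also have "\<dots> = fact q" by simp
  finally have A: "exp (x * ln x - real q + ln 2 / 2) \<le> fact q" by (simp add: x_def)
  have "exp (x * ln x - real q + ln 2 / 2) = exp (real q * ln x) * exp (ln x / 2) * exp (ln 2 / 2) / exp (real q)"
    by (simp add: x_def exp_add exp_diff algebra_simps add_divide_distrib)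
  also have "exp (real q * ln x) = x ^ q" using x by (simp add: exp_of_nat_mult)
  also have "exp (ln x / 2) = sqrt x" using x by (simp add: powr_half_sqrt[symmetric] powr_def)
  also have "exp (ln 2 / 2) = sqrt 2" by (simp add: powr_half_sqrt[symmetric] powr_def)
  also have "exp (real q) = exp 1 ^ q" by (simp add: exp_of_nat_mult[symmetric])
  finally have B: "exp (x * ln x - real q + ln 2 / 2) = (x / exp 1) ^ q * sqrt (2 * x)"
    by (simp add: power_divide real_sqrt_mult)
  have "2 * x = 2 * real q + 1" by (simp add: x_def)
  then show ?thesis using A B by (simp add: x_def)
qed

lemma Mq_le:
  assumes q: "q \<ge> 2"
  shows "Mq q \<le> (real q / exp 1) ^ q * (real q / (real q - 1))"
proof -
  have q1: "real q - 1 > 0" using q by simp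
  have "(1 - 1 / real q) \<le> exp (- 1 / real q)" using exp_ge_add_one_self[of "-1 / real q"] by simp
  then have "(1 - 1 / real q) ^ q \<le> exp (- 1 / real q) ^ q"
    using q by (intro power_mono) (auto simp: field_simps)
  also have "\<dots> = exp (-1)" using q by (simp add: exp_of_nat_mult[symmetric])
  finally have P: "(1 - 1 / real q) ^ q \<le> exp (-1)" .
  have Q1: "real (q - 1) = real q - 1" using q by simp
  have "(real (q - 1) / exp 1) ^ (q - 1) * (real q - 1) = (real q - 1) ^ q / exp 1 ^ (q - 1)"
    using q Q1 by (simp add: power_divide power_eq_if[of "real q - 1" q] split: if_splits)
  also have "(real q - 1) ^ q = real q ^ q * (1 - 1 / real q) ^ q"
    using q by (simp add: power_mult_distrib[symmetric] field_simps)
  also have "exp 1 ^ (q - 1) = exp (1::real) ^ q / exp 1"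
    using q by (cases q) (auto simp: field_simps)
  finally have "(real (q - 1) / exp 1) ^ (q - 1) * (real q - 1) = real q ^ q / exp 1 ^ q * ((1 - 1 / real q) ^ q * exp 1)"
    by (simp add: field_simps)
  also have "\<dots> \<le> real q ^ q / exp 1 ^ q * (exp (-1) * exp 1)"
    using P by (intro mult_left_mono mult_right_mono) auto
  also have "\<dots> = (real q / exp 1) ^ q" by (simp add: power_divide exp_minus)
  finally have "(real (q - 1) / exp 1) ^ (q - 1) \<le> (real q / exp 1) ^ q / (real q - 1)"
    using q1 by (simp add: field_simps)
  then have "Mq q \<le> (real q / exp 1) ^ q + (real q / exp 1) ^ q / (real q - 1)"
    unfolding Mq_def by simp
  also have "\<dots> = (real q / exp 1) ^ q * (real q / (real q - 1))"
    using q1 by (simp add: field_simps)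
  finally show ?thesis .
qed

lemma num3:
  assumes q: "q \<ge> 3"
  shows "(1 + 1 / (2 * real q)) ^ q * Mq q * (sqrt (2 * real q + 1) - 1) + 1 / 2 ^ q \<le> fact q"
proof -
  define \<Phi> where "\<Phi> = ((real q + 1/2) / exp 1) ^ q"
  define y where "y = sqrt (2 * real q + 1)"
  have q0: "real q \<ge> 3" using q by simp
  have y1: "y \<ge> 1" by (simp add: y_def)
  have phi_eq: "(1 + 1 / (2 * real q)) ^ q * (real q / exp 1) ^ q = \<Phi>"
  proof -
    have "(1 + 1 / (2 * real q)) * (real q / exp 1) = (real q + 1/2) / exp 1"
      using q0 by (simp add: field_simps)
    then show ?thesis unfolding \<Phi>_def by (simp add: power_mult_distrib[symmetric])
  qed
  have phi1: "\<Phi> \<ge> 1"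
  proof -
    have "(real q + 1/2) / exp 1 \<ge> 1" using q0 e_le by (simp add: field_simps)
    then show ?thesis unfolding \<Phi>_def by (rule one_le_power)
  qed
  have yb: "y \<le> (7 * real q + 1) / 8"
  proof -
    have h: "49 * real q * real q \<ge> 147 * real q" using q0 by (simp add: mult_right_mono)
    have e1: "((7 * real q + 1) / 8)\<^sup>2 = (7 * real q + 1)\<^sup>2 / 64" by (simp add: power_divide)
    have e2: "(7 * real q + 1)\<^sup>2 = 49 * real q * real q + 14 * real q + 1" by (simp add: power2_eq_square algebra_simps)
    have h2: "128 * real q + 64 \<le> 49 * real q * real q + 14 * real q + 1" using h q0 by linarith
    have "(128 * real q + 64) / 64 \<le> (49 * real q * real q + 14 * real q + 1) / 64"
      by (rule divide_right_mono[OF h2]) simp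
    then have "2 * real q + 1 \<le> ((7 * real q + 1) / 8)\<^sup>2" unfolding e1 e2 by simp
    then show ?thesis unfolding y_def using q0 by (intro real_le_lsqrt) auto
  qed
  have "(1 + 1 / (2 * real q)) ^ q * Mq q * (y - 1) \<le> (1 + 1 / (2 * real q)) ^ q * ((real q / exp 1) ^ q * (real q / (real q - 1))) * (y - 1)"
    using Mq_le[of q] q y1 by (intro mult_right_mono mult_left_mono) auto
  also have "\<dots> = \<Phi> * (real q / (real q - 1)) * (y - 1)" using phi_eq by (simp add: algebra_simps)
  finally have A: "(1 + 1 / (2 * real q)) ^ q * Mq q * (y - 1) \<le> \<Phi> * (real q / (real q - 1)) * (y - 1)" .
  have "\<Phi> * y - \<Phi> * (real q / (real q - 1)) * (y - 1) = \<Phi> * (1 - (y - 1) / (real q - 1))"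
    using q0 by (simp add: field_simps)
  also have "\<dots> \<ge> \<Phi> * (1/8)"
  proof -
    have "(y - 1) / (real q - 1) \<le> 7/8" using yb q0 by (simp add: field_simps)
    then show ?thesis using phi1 by (intro mult_left_mono) auto
  qed
  finally have B: "\<Phi> * (real q / (real q - 1)) * (y - 1) + 1/8 \<le> \<Phi> * y" using phi1 by linarith
  have C: "1 / 2 ^ q \<le> (1/8 :: real)"
  proof -
    have "(2::real) ^ 3 \<le> 2 ^ q" using q by (intro power_increasing) auto
    then show ?thesis by (simp add: field_simps)
  qed
  have D: "\<Phi> * y \<le> fact q" using fact_mid[of q] by (simp add: \<Phi>_def y_def)
  show ?thesis using A B C D unfolding y_def by linarith
qed

lemma num2: "(1 / (3/5)) ^ 2 * Mq 2 * (1 / sqrt (1 - 3/5) - 1) + 1 / 2 ^ 2 \<le> (fact 2 :: real)"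
proof -
  have e1: "exp (1::real) \<ge> 27/10" by (rule e_ge)
  have M: "Mq 2 \<le> 670 / 729"
  proof -
    have "(2 / exp 1) ^ 2 \<le> (2 / (27/10) :: real) ^ 2" using e1 by (intro power_mono divide_left_mono) auto
    moreover have "1 / exp 1 \<le> 1 / (27/10 :: real)" using e1 by (intro divide_left_mono) auto
    ultimately show ?thesis unfolding Mq_def by (simp add: power2_eq_square)
  qed
  have S: "1 / sqrt (1 - 3/5 :: real) \<le> 159/100"
  proof -
    have "(100/159 :: real) \<le> sqrt (2/5)" by (rule real_le_rsqrt) (simp add: power2_eq_square)
    then show ?thesis by (simp add: field_simps)
  qed
  have S1: "1 / sqrt (1 - 3/5 :: real) - 1 \<ge> 0" by (simp add: field_simps)
  have "(1 / (3/5)) ^ 2 * Mq 2 * (1 / sqrt (1 - 3/5) - 1) \<le> (25/9) * (670/729) * (159/100 - 1 :: real)"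
    using M S S1 by (intro mult_mono) (auto simp: Mq_def power2_eq_square)
  then show ?thesis by simp
qed

lemma mom_generic:
  assumes Q: "prob_space Q" and W: "mgf_bd Q W t" and t: "t > 0" and q: "q \<ge> 1"
    and r: "0 < r" "r < 1"
    and num: "(1 / r) ^ q * Mq q * (1 / sqrt (1 - r) - 1) + 1 / 2 ^ q \<le> fact q"
  shows "integrable Q (\<lambda>x. (W x) ^ (2 * q)) \<and>
         (\<integral>x. (W x) ^ (2 * q) \<partial>Q) + t ^ (2 * q) \<le> fact q * (2 * t\<^sup>2) ^ q"
proof -
  from moment_from_mgf[OF Q W t q r]
  have I: "integrable Q (\<lambda>x. (W x) ^ (2 * q))"
    and B: "(r / (2 * t\<^sup>2)) ^ q * (\<integral>x. (W x) ^ (2 * q) \<partial>Q) \<le> Mq q * (1 / sqrt (1 - r) - 1)" by auto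
  have pos: "(2 * t\<^sup>2) ^ q > 0" using t by simp
  have E: "(\<integral>x. (W x) ^ (2 * q) \<partial>Q) \<le> (2 * t\<^sup>2) ^ q * ((1 / r) ^ q * (Mq q * (1 / sqrt (1 - r) - 1)))"
  proof -
    have "(\<integral>x. (W x) ^ (2 * q) \<partial>Q) = ((2 * t\<^sup>2) ^ q * (1 / r) ^ q) * ((r / (2 * t\<^sup>2)) ^ q * (\<integral>x. (W x) ^ (2 * q) \<partial>Q))"
      using t r by (simp add: power_divide field_simps)
    also have "\<dots> \<le> ((2 * t\<^sup>2) ^ q * (1 / r) ^ q) * (Mq q * (1 / sqrt (1 - r) - 1))"
      using B t r by (intro mult_left_mono) auto
    finally show ?thesis by (simp add: algebra_simps)
  qed
  have T: "t ^ (2 * q) = (2 * t\<^sup>2) ^ q * (1 / 2 ^ q)"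
    by (simp add: power_mult power_mult_distrib)
  have "(\<integral>x. (W x) ^ (2 * q) \<partial>Q) + t ^ (2 * q) \<le> (2 * t\<^sup>2) ^ q * ((1 / r) ^ q * Mq q * (1 / sqrt (1 - r) - 1) + 1 / 2 ^ q)"
    using E T by (simp add: algebra_simps)
  also have "\<dots> \<le> (2 * t\<^sup>2) ^ q * fact q" using num pos by (intro mult_left_mono) auto
  finally show ?thesis using I by (simp add: mult.commute)
qed

lemma mom_main:
  assumes Q: "prob_space Q" and W: "mgf_bd Q W t" and t: "t > 0" and q: "q \<ge> 2"
  shows "integrable Q (\<lambda>x. (W x) ^ (2 * q)) \<and>
         (\<integral>x. (W x) ^ (2 * q) \<partial>Q) + t ^ (2 * q) \<le> fact q * (2 * t\<^sup>2) ^ q"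
proof (cases "q = 2")
  case True
  then show ?thesis using mom_generic[OF Q W t _ _ _ num2] by simp
next
  case False
  then have q3: "q \<ge> 3" using q by simp
  define r where "r = 2 * real q / (2 * real q + 1)"
  have r: "0 < r" "r < 1" using q by (auto simp: r_def field_simps)
  have r1: "1 / r = 1 + 1 / (2 * real q)" using q by (simp add: r_def field_simps)
  have r2: "1 / sqrt (1 - r) = sqrt (2 * real q + 1)"
  proof -
    have "1 - r = 1 / (2 * real q + 1)" by (simp add: r_def field_simps)
    then show ?thesis by (simp add: real_sqrt_divide)
  qed
  show ?thesis
    using q by (intro mom_generic[OF Q W t _ r]) (use num3[OF q3] r1 r2 in auto)
qed

lemma convex_pow_nonneg: "convex_on {0::real..} (\<lambda>x. x ^ n)"
proof (cases "even n")
  case True show ?thesis by (rule convex_on_subset[OF convex_power_even[OF True]]) auto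
next
  case False then show ?thesis by (intro convex_power_odd) simp
qed

lemma cosh_ge: "exp x + exp (- x) \<ge> 2 + (x::real)\<^sup>2"
proof -
  have s: "(\<lambda>n. if even n then x ^ n /\<^sub>R fact n else 0) sums cosh x" by (rule cosh_converges)
  have nn: "0 \<le> (if even n then x ^ n /\<^sub>R fact n else 0)" for n
    by (auto simp: zero_le_even_power)
  have "(\<Sum>n\<in>{..<3}. if even n then x ^ n /\<^sub>R fact n else 0) \<le> (\<Sum>n. if even n then x ^ n /\<^sub>R fact n else 0)"
    by (rule sum_le_suminf) (use s nn in \<open>auto simp: sums_iff\<close>)
  then have "(\<Sum>n\<in>{..<3}. if even n then x ^ n /\<^sub>R fact n else 0) \<le> cosh x"
    using s by (simp add: sums_iff)
  moreover have "(\<Sum>n\<in>{..<3}. if even n then x ^ n /\<^sub>R fact n else 0) = 1 + x\<^sup>2 / 2"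
    by (simp add: eval_nat_numeral)
  ultimately show ?thesis by (simp add: cosh_field_def)
qed

definition mom_bd :: "'a measure \<Rightarrow> ('a \<Rightarrow> real) \<Rightarrow> real \<Rightarrow> bool" where
  "mom_bd Q X c \<longleftrightarrow> X \<in> borel_measurable Q \<and>
     (\<forall>q\<ge>1. integrable Q (\<lambda>x. \<bar>X x\<bar> ^ q) \<and> (\<integral>x. \<bar>X x\<bar> ^ q \<partial>Q) \<le> fact q * c ^ q)"

lemma mom_bd_nonneg: "mom_bd Q X c \<Longrightarrow> c \<ge> 0"
proof -
  assume "mom_bd Q X c"
  then have a: "(\<integral>x. \<bar>X x\<bar> ^ 1 \<partial>Q) \<le> fact 1 * c ^ 1" unfolding mom_bd_def by blast
  have b: "(\<integral>x. \<bar>X x\<bar> ^ 1 \<partial>Q) \<ge> 0" by (intro integral_nonneg_AE) auto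
  from order_trans[OF b a] show "c \<ge> 0" by simp
qed

lemma mom_bd_mono: "mom_bd Q X c \<Longrightarrow> c \<le> c' \<Longrightarrow> mom_bd Q X c'"
proof -
  assume m: "mom_bd Q X c" and cc: "c \<le> c'"
  have c0: "c \<ge> 0" by (rule mom_bd_nonneg[OF m])
  show ?thesis unfolding mom_bd_def
  proof (intro conjI allI impI)
    show "X \<in> borel_measurable Q" using m by (simp add: mom_bd_def)
    fix q :: nat assume q: "q \<ge> 1"
    show "integrable Q (\<lambda>x. \<bar>X x\<bar> ^ q)" using m q by (simp add: mom_bd_def)
    have "(\<integral>x. \<bar>X x\<bar> ^ q \<partial>Q) \<le> fact q * c ^ q" using m q by (simp add: mom_bd_def)
    also have "\<dots> \<le> fact q * c' ^ q" using c0 cc by (intro mult_left_mono power_mono) auto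
    finally show "(\<integral>x. \<bar>X x\<bar> ^ q \<partial>Q) \<le> fact q * c' ^ q" .
  qed
qed

lemma mom_bd_limit:
  assumes c0: "c \<ge> 0" and h: "\<And>c'. c' > c \<Longrightarrow> mom_bd Q X c'"
  shows "mom_bd Q X c"
  unfolding mom_bd_def
proof (intro conjI allI impI)
  have m1: "mom_bd Q X (c + 1)" by (rule h) simp
  show "X \<in> borel_measurable Q" using m1 by (simp add: mom_bd_def)
  fix q :: nat assume q: "q \<ge> 1"
  show "integrable Q (\<lambda>x. \<bar>X x\<bar> ^ q)" using m1 q by (simp add: mom_bd_def)
  show "(\<integral>x. \<bar>X x\<bar> ^ q \<partial>Q) \<le> fact q * c ^ q"
  proof (rule dense_ge)
    fix y assume y: "fact q * c ^ q < y"
    have fq: "fact q > (0::real)" by simp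
    define c' where "c' = root q (y / fact q)"
    have yq: "y / fact q > c ^ q" using y fq by (simp add: field_simps)
    have cq0: "c ^ q \<ge> 0" using c0 by simp
    have "c' > c"
    proof -
      have "root q (c ^ q) < root q (y / fact q)" using yq q by (subst real_root_less_iff) auto
      moreover have "root q (c ^ q) = c" using c0 q by (simp add: real_root_pos2)
      ultimately show ?thesis by (simp add: c'_def)
    qed
    then have "mom_bd Q X c'" by (rule h)
    then have "(\<integral>x. \<bar>X x\<bar> ^ q \<partial>Q) \<le> fact q * c' ^ q" using q by (simp add: mom_bd_def)
    also have "c' ^ q = y / fact q" unfolding c'_def using q yq cq0 by (subst real_root_pow_pos2) auto
    finally show "(\<integral>x. \<bar>X x\<bar> ^ q \<partial>Q) \<le> y" using fq by simp
  qed
qed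

lemma mom_bd_dom:
  assumes m: "mom_bd Q X c" and Y: "Y \<in> borel_measurable Q" and d: "\<And>x. x \<in> space Q \<Longrightarrow> \<bar>Y x\<bar> \<le> \<bar>X x\<bar>"
  shows "mom_bd Q Y c"
  unfolding mom_bd_def
proof (intro conjI allI impI Y)
  fix q :: nat assume q: "q \<ge> 1"
  have IX: "integrable Q (\<lambda>x. \<bar>X x\<bar> ^ q)" using m q by (simp add: mom_bd_def)
  have pw: "x \<in> space Q \<Longrightarrow> \<bar>Y x\<bar> ^ q \<le> \<bar>X x\<bar> ^ q" for x using d by (intro power_mono) auto
  show IY: "integrable Q (\<lambda>x. \<bar>Y x\<bar> ^ q)"
  proof (rule Bochner_Integration.integrable_bound[OF IX])
    show "(\<lambda>x. \<bar>Y x\<bar> ^ q) \<in> borel_measurable Q" using Y by measurable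
  qed (use pw in \<open>auto intro!: AE_I2\<close>)
  have "(\<integral>x. \<bar>Y x\<bar> ^ q \<partial>Q) \<le> (\<integral>x. \<bar>X x\<bar> ^ q \<partial>Q)"
    by (intro integral_mono' IX) (use pw in \<open>auto intro!: AE_I2 \<close>)
  also have "\<dots> \<le> fact q * c ^ q" using m q by (simp add: mom_bd_def)
  finally show "(\<integral>x. \<bar>Y x\<bar> ^ q \<partial>Q) \<le> fact q * c ^ q" .
qed

lemma mom_bd_scale:
  assumes m: "mom_bd Q X c"
  shows "mom_bd Q (\<lambda>x. a * X x) (\<bar>a\<bar> * c)"
  unfolding mom_bd_def
proof (intro conjI allI impI)
  show "(\<lambda>x. a * X x) \<in> borel_measurable Q" using m by (auto simp: mom_bd_def)
  fix q :: nat assume q: "q \<ge> 1"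
  have IX: "integrable Q (\<lambda>x. \<bar>X x\<bar> ^ q)" using m q by (simp add: mom_bd_def)
  have eq: "(\<lambda>x. \<bar>a * X x\<bar> ^ q) = (\<lambda>x. \<bar>a\<bar> ^ q * \<bar>X x\<bar> ^ q)" by (simp add: abs_mult power_mult_distrib)
  show "integrable Q (\<lambda>x. \<bar>a * X x\<bar> ^ q)" unfolding eq using IX by simp
  have "(\<integral>x. \<bar>a * X x\<bar> ^ q \<partial>Q) = \<bar>a\<bar> ^ q * (\<integral>x. \<bar>X x\<bar> ^ q \<partial>Q)" unfolding eq by simp
  also have "\<dots> \<le> \<bar>a\<bar> ^ q * (fact q * c ^ q)" using m q by (intro mult_left_mono) (auto simp: mom_bd_def)
  finally show "(\<integral>x. \<bar>a * X x\<bar> ^ q \<partial>Q) \<le> fact q * (\<bar>a\<bar> * c) ^ q" by (simp add: power_mult_distrib algebra_simps)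
qed

lemma mom_bd_const:
  assumes Q: "prob_space Q"
  shows "mom_bd Q (\<lambda>x. a) \<bar>a\<bar>"
  unfolding mom_bd_def
proof (intro conjI allI impI)
  interpret prob_space Q by (rule Q)
  show "(\<lambda>x. a) \<in> borel_measurable Q" by simp
  fix q :: nat assume q: "q \<ge> 1"
  show "integrable Q (\<lambda>x. \<bar>a\<bar> ^ q)" by simp
  have "(1::real) \<le> fact q" by simp
  then have "1 * \<bar>a\<bar> ^ q \<le> fact q * \<bar>a\<bar> ^ q" by (intro mult_right_mono) auto
  then show "(\<integral>x. \<bar>a\<bar> ^ q \<partial>Q) \<le> fact q * \<bar>a\<bar> ^ q" by (simp add: prob_space)
qed

lemma mom_bd_sum_pos:
  assumes I: "finite I" "I \<noteq> {}" and m: "\<And>i. i \<in> I \<Longrightarrow> mom_bd Q (X i) (c i)"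
    and cp: "\<And>i. i \<in> I \<Longrightarrow> c i > 0"
  shows "mom_bd Q (\<lambda>x. \<Sum>i\<in>I. X i x) (\<Sum>i\<in>I. c i)"
  unfolding mom_bd_def
proof (intro conjI allI impI)
  have Xm[measurable]: "X i \<in> borel_measurable Q" if "i \<in> I" for i using m[OF that] by (simp add: mom_bd_def)
  show "(\<lambda>x. \<Sum>i\<in>I. X i x) \<in> borel_measurable Q" by measurable
  define C where "C = (\<Sum>i\<in>I. c i)"
  have C: "C > 0" unfolding C_def using I cp by (intro sum_pos) auto
  fix q :: nat assume q: "q \<ge> 1"
  define w where "w i = c i / C" for i
  have w: "i \<in> I \<Longrightarrow> w i > 0" for i using cp C by (simp add: w_def)
  have ws: "(\<Sum>i\<in>I. w i) = 1" using C by (simp add: w_def C_def sum_divide_distrib[symmetric])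
  have IX: "i \<in> I \<Longrightarrow> integrable Q (\<lambda>x. \<bar>X i x\<bar> ^ q)" for i using m q by (simp add: mom_bd_def)
  have pw: "\<bar>\<Sum>i\<in>I. X i x\<bar> ^ q \<le> (\<Sum>i\<in>I. (C / c i) ^ (q - 1) * \<bar>X i x\<bar> ^ q)" for x
  proof -
    have "\<bar>\<Sum>i\<in>I. X i x\<bar> ^ q \<le> (\<Sum>i\<in>I. \<bar>X i x\<bar>) ^ q"
      by (intro power_mono sum_abs) auto
    also have "(\<Sum>i\<in>I. \<bar>X i x\<bar>) = (\<Sum>i\<in>I. w i *\<^sub>R (\<bar>X i x\<bar> / w i))"
      using w by (intro sum.cong) (auto dest!: w simp: less_imp_neq[symmetric])
    also have "(\<Sum>i\<in>I. w i *\<^sub>R (\<bar>X i x\<bar> / w i)) ^ q \<le> (\<Sum>i\<in>I. w i * (\<bar>X i x\<bar> / w i) ^ q)"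
      using I ws w by (intro convex_on_sum[OF _ _ convex_pow_nonneg, where S=I]) (auto simp: less_imp_le)
    also have "\<dots> = (\<Sum>i\<in>I. (C / c i) ^ (q - 1) * \<bar>X i x\<bar> ^ q)"
    proof (intro sum.cong refl)
      fix i assume i: "i \<in> I"
      have "w i * (\<bar>X i x\<bar> / w i) ^ q = \<bar>X i x\<bar> ^ q / w i ^ (q - 1)"
        using w[OF i] q by (simp add: power_divide power_eq_if[of "w i" q] field_simps)
      also have "\<dots> = (C / c i) ^ (q - 1) * \<bar>X i x\<bar> ^ q"
        using cp[OF i] C by (simp add: w_def power_divide field_simps)
      finally show "w i * (\<bar>X i x\<bar> / w i) ^ q = (C / c i) ^ (q - 1) * \<bar>X i x\<bar> ^ q" .
    qed
    finally show ?thesis .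
  qed
  have IS: "integrable Q (\<lambda>x. \<Sum>i\<in>I. (C / c i) ^ (q - 1) * \<bar>X i x\<bar> ^ q)"
    by (auto intro!: Bochner_Integration.integrable_sum integrable_mult_right IX)
  show IL: "integrable Q (\<lambda>x. \<bar>\<Sum>i\<in>I. X i x\<bar> ^ q)"
  proof (rule Bochner_Integration.integrable_bound[OF IS])
    show "(\<lambda>x. \<bar>\<Sum>i\<in>I. X i x\<bar> ^ q) \<in> borel_measurable Q" by measurable
    show "AE x in Q. norm (\<bar>\<Sum>i\<in>I. X i x\<bar> ^ q) \<le> norm (\<Sum>i\<in>I. (C / c i) ^ (q - 1) * \<bar>X i x\<bar> ^ q)"
    proof (intro AE_I2)
      fix x
      have a: "0 \<le> \<bar>\<Sum>i\<in>I. X i x\<bar> ^ q" by simp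
      have b: "\<bar>\<Sum>i\<in>I. X i x\<bar> ^ q \<le> (\<Sum>i\<in>I. (C / c i) ^ (q - 1) * \<bar>X i x\<bar> ^ q)" by (rule pw)
      show "norm (\<bar>\<Sum>i\<in>I. X i x\<bar> ^ q) \<le> norm (\<Sum>i\<in>I. (C / c i) ^ (q - 1) * \<bar>X i x\<bar> ^ q)"
        using a b by (simp only: real_norm_def abs_of_nonneg[OF a] abs_of_nonneg[OF order.trans[OF a b]])
    qed
  qed
  have "(\<integral>x. \<bar>\<Sum>i\<in>I. X i x\<bar> ^ q \<partial>Q) \<le> (\<integral>x. (\<Sum>i\<in>I. (C / c i) ^ (q - 1) * \<bar>X i x\<bar> ^ q) \<partial>Q)"
    by (rule integral_mono[OF IL IS pw])
  also have "\<dots> = (\<Sum>i\<in>I. (C / c i) ^ (q - 1) * (\<integral>x. \<bar>X i x\<bar> ^ q \<partial>Q))"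
    by (subst Bochner_Integration.integral_sum) (auto intro!: integrable_mult_right IX)
  also have "\<dots> \<le> (\<Sum>i\<in>I. (C / c i) ^ (q - 1) * (fact q * c i ^ q))"
    using m q by (intro sum_mono mult_left_mono) (auto simp: mom_bd_def less_imp_le C cp)
  also have "\<dots> = (\<Sum>i\<in>I. fact q * C ^ (q - 1) * c i)"
  proof (intro sum.cong refl)
    fix i assume i: "i \<in> I"
    have "c i ^ q = c i ^ (q - 1) * c i" using q by (simp add: power_eq_if[of "c i" q])
    then show "(C / c i) ^ (q - 1) * (fact q * c i ^ q) = fact q * C ^ (q - 1) * c i"
      using cp[OF i] by (simp add: power_divide field_simps)
  qed
  also have "\<dots> = fact q * C ^ (q - 1) * C" by (simp add: C_def sum_distrib_left)
  also have "\<dots> = fact q * C ^ q" using q by (simp add: power_eq_if[of C q])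
  finally show "(\<integral>x. \<bar>\<Sum>i\<in>I. X i x\<bar> ^ q \<partial>Q) \<le> fact q * (\<Sum>i\<in>I. c i) ^ q" by (simp add: C_def)
qed

lemma mom_bd_zero: "mom_bd Q (\<lambda>x. 0) 0"
  unfolding mom_bd_def by (auto simp: power_0_left)

lemma mom_bd_sum:
  assumes I: "finite I" and m: "\<And>i. i \<in> I \<Longrightarrow> mom_bd Q (X i) (c i)"
  shows "mom_bd Q (\<lambda>x. \<Sum>i\<in>I. X i x) (\<Sum>i\<in>I. c i)"
proof (cases "I = {}")
  case True then show ?thesis by (simp add: mom_bd_zero)
next
  case False
  have c0: "i \<in> I \<Longrightarrow> c i \<ge> 0" for i using m mom_bd_nonneg by blast
  show ?thesis
  proof (rule mom_bd_limit)
    show "(\<Sum>i\<in>I. c i) \<ge> 0" using c0 by (simp add: sum_nonneg)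
    fix c' assume c': "c' > (\<Sum>i\<in>I. c i)"
    have cI: "card I > 0" using I False by (simp add: card_gt_0_iff)
    define \<epsilon> where "\<epsilon> = (c' - (\<Sum>i\<in>I. c i)) / card I"
    have e: "\<epsilon> > 0" using c' cI by (simp add: \<epsilon>_def)
    have "mom_bd Q (\<lambda>x. \<Sum>i\<in>I. X i x) (\<Sum>i\<in>I. c i + \<epsilon>)"
      using I False e c0 by (intro mom_bd_sum_pos mom_bd_mono[OF m]) (auto simp: add_nonneg_pos)
    also have "(\<Sum>i\<in>I. c i + \<epsilon>) = c'" using cI by (simp add: sum.distrib \<epsilon>_def)
    finally show "mom_bd Q (\<lambda>x. \<Sum>i\<in>I. X i x) c'" .
  qed
qed

lemma mom_bd_add:
  assumes "mom_bd Q X a" "mom_bd Q Y b"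
  shows "mom_bd Q (\<lambda>x. X x + Y x) (a + b)"
proof -
  have "mom_bd Q (\<lambda>x. \<Sum>i\<in>{True, False}. (if i then X else Y) x) (\<Sum>i\<in>{True, False}. if i then a else b)"
    using assms by (intro mom_bd_sum) auto
  then show ?thesis by simp
qed

lemma mom_bd_subexp:
  assumes m: "mom_bd Q X c"
  shows "subexp_norm Q X \<le> ereal c \<and> subexponential Q X"
proof -
  have c0: "c \<ge> 0" by (rule mom_bd_nonneg[OF m])
  have le: "subexp_norm Q X \<le> ereal c"
    unfolding subexp_norm_def
  proof (rule SUP_least)
    fix k :: nat assume k: "k \<in> {1..}"
    then have k1: "k \<ge> 1" by simp
    have I: "integrable Q (\<lambda>x. \<bar>X x\<bar> ^ k)" and B: "(\<integral>x. \<bar>X x\<bar> ^ k \<partial>Q) \<le> fact k * c ^ k"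
      using m k1 by (auto simp: mom_bd_def)
    have nn: "(\<integral>x. \<bar>X x\<bar> ^ k \<partial>Q) / fact k \<ge> 0" by (intro divide_nonneg_pos integral_nonneg_AE) auto
    have B': "(\<integral>x. \<bar>X x\<bar> ^ k \<partial>Q) / fact k \<le> c ^ k" using B by (simp add: field_simps)
    have "((\<integral>x. \<bar>X x\<bar> ^ k \<partial>Q) / fact k) powr (1 / real k) \<le> (c ^ k) powr (1 / real k)"
      using nn B' by (intro powr_mono2) auto
    also have "(c ^ k) powr (1 / real k) = c"
    proof (cases "c = 0")
      case True then show ?thesis using k1 by (simp add: power_0_left)
    next
      case False
      then have "c > 0" using c0 by simp
      then show ?thesis using k1 by (simp add: powr_realpow[symmetric] powr_powr)
    qed
    finally show "(if integrable Q (\<lambda>x. \<bar>X x\<bar> ^ k)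
        then ereal (((\<integral>x. \<bar>X x\<bar> ^ k \<partial>Q) / fact k) powr (1 / real k)) else \<infinity>) \<le> ereal c"
      using I by simp
  qed
  moreover have "subexponential Q X"
    unfolding subexponential_def using m le by (auto simp: mom_bd_def intro: le_less_trans)
  ultimately show ?thesis by blast
qed

lemma subgauss_norm_nonneg:
  assumes "subgaussian Q W" shows "subgauss_norm Q W \<ge> 0"
  using assms unfolding subgaussian_def subgauss_norm_def
  by (intro cInf_greatest) (auto simp: subgauss_set_def less_imp_le)

lemma sg_to_mgf:
  assumes sg: "subgaussian Q W" and m0: "integral\<^sup>L Q W = 0" and nb: "subgauss_norm Q W \<le> \<sigma>" and t: "\<sigma> < t"
  shows "mgf_bd Q W t"
proof -
  have Wm: "W \<in> borel_measurable Q" and ne: "subgauss_set Q W \<noteq> {}" using sg by (auto simp: subgaussian_def)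
  have "Inf (subgauss_set Q W) < t" using nb t by (simp add: subgauss_norm_def)
  then obtain s where s: "s \<in> subgauss_set Q W" "s < t" using cInf_lessD[OF ne] by blast
  have s0: "s > 0" and sb: "\<And>l. integrable Q (\<lambda>x. exp (l * (W x - 0))) \<and> (\<integral>x. exp (l * (W x - 0)) \<partial>Q) \<le> exp (l\<^sup>2 * s\<^sup>2 / 2)"
    using s(1) m0 by (auto simp: subgauss_set_def)
  show ?thesis unfolding mgf_bd_def
  proof (intro conjI allI Wm)
    fix l :: real
    show "integrable Q (\<lambda>x. exp (l * W x))" using sb[of l] by simp
    have "s\<^sup>2 \<le> t\<^sup>2" using s0 s(2) by (intro power_mono) auto
    then have A: "l\<^sup>2 * s\<^sup>2 / 2 \<le> l\<^sup>2 * t\<^sup>2 / 2" by (intro divide_right_mono mult_left_mono) auto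
    have B: "exp (l\<^sup>2 * s\<^sup>2 / 2) \<le> exp (l\<^sup>2 * t\<^sup>2 / 2)" using A by (simp only: exp_le_cancel_iff)
    have C: "(\<integral>x. exp (l * W x) \<partial>Q) \<le> exp (l\<^sup>2 * s\<^sup>2 / 2)" using sb[of l] by simp
    show "(\<integral>x. exp (l * W x) \<partial>Q) \<le> exp (l\<^sup>2 * t\<^sup>2 / 2)" using B C by linarith
  qed
qed

lemma mgf_mono:
  assumes W: "mgf_bd Q W t" and tt: "\<bar>t\<bar> \<le> t'"
  shows "mgf_bd Q W t'"
  unfolding mgf_bd_def
proof (intro conjI allI)
  show "W \<in> borel_measurable Q" using W by (simp add: mgf_bd_def)
  fix l :: real
  show "integrable Q (\<lambda>x. exp (l * W x))" using W by (simp add: mgf_bd_def)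
  have "t\<^sup>2 \<le> t'\<^sup>2" using tt by (metis abs_ge_zero power2_abs power_mono)
  then have "l\<^sup>2 * t\<^sup>2 / 2 \<le> l\<^sup>2 * t'\<^sup>2 / 2" by (intro divide_right_mono mult_left_mono) auto
  then show "(\<integral>x. exp (l * W x) \<partial>Q) \<le> exp (l\<^sup>2 * t'\<^sup>2 / 2)"
    using W by (auto simp: mgf_bd_def intro: order_trans)
qed

lemma exp_m1_le: "a \<ge> 0 \<Longrightarrow> exp a - 1 \<le> a * exp (a::real)"
proof -
  assume a: "a \<ge> 0"
  have "1 + (- a) \<le> exp (- a)" by (rule exp_ge_add_one_self)
  then have "(1 - a) * exp a \<le> exp (- a) * exp a" by (intro mult_right_mono) auto
  then show ?thesis by (simp add: exp_minus field_simps)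
qed

lemma mgf_var:
  assumes Q: "prob_space Q" and W: "mgf_bd Q W t"
  shows "integrable Q W \<and> integrable Q (\<lambda>x. (W x)\<^sup>2) \<and> (\<integral>x. (W x)\<^sup>2 \<partial>Q) \<le> t\<^sup>2"
proof -
  interpret prob_space Q by (rule Q)
  have Wm[measurable]: "W \<in> borel_measurable Q" using W by (simp add: mgf_bd_def)
  have IE: "integrable Q (\<lambda>x. exp (l * W x))" for l using W by (simp add: mgf_bd_def)
  have BE: "(\<integral>x. exp (l * W x) \<partial>Q) \<le> exp (l\<^sup>2 * t\<^sup>2 / 2)" for l using W by (simp add: mgf_bd_def)
  have pw: "(l * W x)\<^sup>2 \<le> exp (l * W x) + exp ((- l) * W x) - 2" for l x
    using cosh_ge[of "l * W x"] by simp
  have I2: "integrable Q (\<lambda>x. exp (l * W x) + exp ((- l) * W x) - 2)" for l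
    using IE[of l] IE[of "-l"] by auto
  have IW2: "integrable Q (\<lambda>x. (W x)\<^sup>2)"
  proof (rule Bochner_Integration.integrable_bound[OF I2[of 1]])
    show "(\<lambda>x. (W x)\<^sup>2) \<in> borel_measurable Q" by measurable
    show "AE x in Q. norm ((W x)\<^sup>2) \<le> norm (exp (1 * W x) + exp ((- 1) * W x) - 2)"
      using pw[of 1] by (auto intro!: AE_I2 order.trans[OF _ abs_ge_self])
  qed
  have IW: "integrable Q W"
  proof (rule Bochner_Integration.integrable_bound[of _ "\<lambda>x. 1 + (W x)\<^sup>2"])
    show "integrable Q (\<lambda>x. 1 + (W x)\<^sup>2)" using IW2 by auto
    show "W \<in> borel_measurable Q" by measurable
    show "AE x in Q. norm (W x) \<le> norm (1 + (W x)\<^sup>2)"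
    proof (intro AE_I2)
      fix x
      have "\<bar>W x\<bar> \<le> 1 + (W x)\<^sup>2"
      proof (cases "\<bar>W x\<bar> \<le> 1")
        case True then show ?thesis by (simp add: add_increasing2)
      next
        case False
        then have "\<bar>W x\<bar> \<le> \<bar>W x\<bar> * \<bar>W x\<bar>" by (intro mult_le_cancel_left1[THEN iffD2]) auto
        then show ?thesis by (simp add: power2_eq_square abs_mult[symmetric])
      qed
      then show "norm (W x) \<le> norm (1 + (W x)\<^sup>2)" by simp
    qed
  qed
  have key: "(\<integral>x. (W x)\<^sup>2 \<partial>Q) \<le> t\<^sup>2 * exp (l\<^sup>2 * t\<^sup>2 / 2)" if l: "l > 0" for l
  proof -
    have "l\<^sup>2 * (\<integral>x. (W x)\<^sup>2 \<partial>Q) = (\<integral>x. (l * W x)\<^sup>2 \<partial>Q)"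
      by (simp add: power_mult_distrib)
    also have "\<dots> \<le> (\<integral>x. exp (l * W x) + exp ((- l) * W x) - 2 \<partial>Q)"
      using IW2 I2 pw by (intro integral_mono) (auto simp: power_mult_distrib)
    also have "\<dots> = (\<integral>x. exp (l * W x) \<partial>Q) + (\<integral>x. exp ((- l) * W x) \<partial>Q) - 2"
      using IE[of l] IE[of "-l"] by (simp add: prob_space)
    also have "\<dots> \<le> 2 * (exp (l\<^sup>2 * t\<^sup>2 / 2) - 1)" using BE[of l] BE[of "-l"] by simp
    also have "\<dots> \<le> 2 * ((l\<^sup>2 * t\<^sup>2 / 2) * exp (l\<^sup>2 * t\<^sup>2 / 2))"
      by (intro mult_left_mono exp_m1_le) auto
    finally have "l\<^sup>2 * (\<integral>x. (W x)\<^sup>2 \<partial>Q) \<le> l\<^sup>2 * (t\<^sup>2 * exp (l\<^sup>2 * t\<^sup>2 / 2))" by (simp add: algebra_simps)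
    then show ?thesis using l by (simp add: mult_le_cancel_left_pos)
  qed
  have "(\<integral>x. (W x)\<^sup>2 \<partial>Q) \<le> t\<^sup>2"
  proof (rule dense_ge)
    fix y assume y: "t\<^sup>2 < y"
    show "(\<integral>x. (W x)\<^sup>2 \<partial>Q) \<le> y"
    proof (cases "t = 0")
      case True
      then show ?thesis using key[of 1] y by simp
    next
      case False
      then have t2: "t\<^sup>2 > 0" by simp
      define l where "l = sqrt (2 * ln (y / t\<^sup>2)) / \<bar>t\<bar>"
      have yt: "y / t\<^sup>2 > 1" using y t2 by (simp add: field_simps)
      have lnp: "ln (y / t\<^sup>2) > 0" using yt by simp
      have l: "l > 0" using lnp False by (simp add: l_def)
      have "l\<^sup>2 * t\<^sup>2 / 2 = ln (y / t\<^sup>2)"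
        using lnp False by (simp add: l_def power_divide power2_abs field_simps)
      moreover have "exp (ln (y / t\<^sup>2)) = y / t\<^sup>2" using yt by simp
      ultimately have "t\<^sup>2 * exp (l\<^sup>2 * t\<^sup>2 / 2) = y" using t2 by simp
      then show ?thesis using key[OF l] by simp
    qed
  qed
  then show ?thesis using IW IW2 by blast
qed

lemma abs_sq_sub_pow:
  fixes w v :: real assumes v: "v \<ge> 0"
  shows "\<bar>w\<^sup>2 - v\<bar> ^ q \<le> w ^ (2 * q) + v ^ q"
proof (cases "w\<^sup>2 \<ge> v")
  case True
  then have "\<bar>w\<^sup>2 - v\<bar> ^ q \<le> (w\<^sup>2) ^ q" using v by (intro power_mono) auto
  moreover have "v ^ q \<ge> 0" using v by simp
  ultimately show ?thesis by (simp add: power_mult)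
next
  case False
  then have "\<bar>w\<^sup>2 - v\<bar> ^ q \<le> v ^ q" using v by (intro power_mono) auto
  moreover have "w ^ (2 * q) \<ge> 0" by (simp add: power_mult)
  ultimately show ?thesis by linarith
qed

lemma mgf_sq:
  assumes Q: "prob_space Q" and W: "mgf_bd Q W t" and t: "t > 0"
  shows "mom_bd Q (\<lambda>x. (W x)\<^sup>2 - (\<integral>x. (W x)\<^sup>2 \<partial>Q)) (2 * t\<^sup>2) \<and> mom_bd Q (\<lambda>x. (W x)\<^sup>2) (2 * t\<^sup>2)"
proof -
  interpret prob_space Q by (rule Q)
  have Wm[measurable]: "W \<in> borel_measurable Q" using W by (simp add: mgf_bd_def)
  define v where "v = (\<integral>x. (W x)\<^sup>2 \<partial>Q)"
  from mgf_var[OF Q W] have IW2: "integrable Q (\<lambda>x. (W x)\<^sup>2)" and vt: "v \<le> t\<^sup>2" by (auto simp: v_def)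
  have v0: "v \<ge> 0" unfolding v_def by (intro integral_nonneg_AE) auto
  have A: "mom_bd Q (\<lambda>x. (W x)\<^sup>2 - v) (2 * t\<^sup>2)"
    unfolding mom_bd_def
  proof (rule conjI, measurable, intro allI impI)
    fix q :: nat assume q: "q \<ge> 1"
    show "integrable Q (\<lambda>x. \<bar>(W x)\<^sup>2 - v\<bar> ^ q) \<and> (\<integral>x. \<bar>(W x)\<^sup>2 - v\<bar> ^ q \<partial>Q) \<le> fact q * (2 * t\<^sup>2) ^ q"
    proof (cases "q = 1")
      case True
      have I1: "integrable Q (\<lambda>x. \<bar>(W x)\<^sup>2 - v\<bar>)" using IW2 by auto
      have "(\<integral>x. \<bar>(W x)\<^sup>2 - v\<bar> \<partial>Q) \<le> (\<integral>x. (W x)\<^sup>2 + v \<partial>Q)"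
        using IW2 I1 v0 by (intro integral_mono) (auto simp: abs_le_iff)
      also have "\<dots> = 2 * v" using IW2 by (simp add: v_def prob_space)
      finally show ?thesis using True I1 vt by simp
    next
      case False
      then have q2: "q \<ge> 2" using q by simp
      from mom_main[OF Q W t q2]
      have IP: "integrable Q (\<lambda>x. (W x) ^ (2 * q))" and BP: "(\<integral>x. (W x) ^ (2 * q) \<partial>Q) + t ^ (2 * q) \<le> fact q * (2 * t\<^sup>2) ^ q"
        by auto
      have IB: "integrable Q (\<lambda>x. (W x) ^ (2 * q) + v ^ q)" using IP by simp
      have pw: "\<bar>(W x)\<^sup>2 - v\<bar> ^ q \<le> (W x) ^ (2 * q) + v ^ q" for x by (rule abs_sq_sub_pow[OF v0])
      have I: "integrable Q (\<lambda>x. \<bar>(W x)\<^sup>2 - v\<bar> ^ q)"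
      proof (rule Bochner_Integration.integrable_bound[OF IB])
        show "(\<lambda>x. \<bar>(W x)\<^sup>2 - v\<bar> ^ q) \<in> borel_measurable Q" by measurable
        show "AE x in Q. norm (\<bar>(W x)\<^sup>2 - v\<bar> ^ q) \<le> norm ((W x) ^ (2 * q) + v ^ q)"
          using pw by (auto intro!: AE_I2 order.trans[OF _ abs_ge_self])
      qed
      have "(\<integral>x. \<bar>(W x)\<^sup>2 - v\<bar> ^ q \<partial>Q) \<le> (\<integral>x. (W x) ^ (2 * q) + v ^ q \<partial>Q)"
        by (rule integral_mono[OF I IB pw])
      also have "\<dots> = (\<integral>x. (W x) ^ (2 * q) \<partial>Q) + v ^ q" using IP by (simp add: prob_space)
      also have "\<dots> \<le> (\<integral>x. (W x) ^ (2 * q) \<partial>Q) + t ^ (2 * q)"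
        using vt v0 by (simp add: power_mult power_mono)
      finally show ?thesis using I BP by simp
    qed
  qed
  have B: "mom_bd Q (\<lambda>x. (W x)\<^sup>2) (2 * t\<^sup>2)"
    unfolding mom_bd_def
  proof (rule conjI, measurable, intro allI impI)
    fix q :: nat assume q: "q \<ge> 1"
    have eq: "(\<lambda>x. \<bar>(W x)\<^sup>2\<bar> ^ q) = (\<lambda>x. (W x) ^ (2 * q))" by (simp add: power_mult)
    show "integrable Q (\<lambda>x. \<bar>(W x)\<^sup>2\<bar> ^ q) \<and> (\<integral>x. \<bar>(W x)\<^sup>2\<bar> ^ q \<partial>Q) \<le> fact q * (2 * t\<^sup>2) ^ q"
    proof (cases "q = 1")
      case True
      have "0 \<le> t\<^sup>2" by simp
      then show ?thesis using True IW2 vt by (simp add: v_def) (use zero_le_power2[of t] in linarith)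
    next
      case False
      then have q2: "q \<ge> 2" using q by simp
      from mom_main[OF Q W t q2] show ?thesis unfolding eq
        by (auto intro: order_trans[rotated] simp: add_increasing2)
    qed
  qed
  show ?thesis using A B by (simp add: v_def)
qed

lemma indep_blocks:
  assumes Q: "prob_space Q" and ind: "prob_space.indep_vars Q (\<lambda>_. borel) X I"
    and K: "\<And>j. j \<in> L \<Longrightarrow> Kb j \<subseteq> I" and D: "disjoint_family_on Kb L"
    and F: "\<And>j. j \<in> L \<Longrightarrow> F j \<in> borel_measurable (PiM (Kb j) (\<lambda>_. borel))"
  shows "prob_space.indep_vars Q (\<lambda>_. borel) (\<lambda>j x. F j (restrict (\<lambda>i. X i x) (Kb j))) L"
proof -
  interpret prob_space Q by (rule Q)
  have "indep_vars (\<lambda>j. PiM (Kb j) (\<lambda>_. borel)) (\<lambda>j x. restrict (\<lambda>i. X i x) (Kb j)) L"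
    by (rule indep_vars_restrict[OF ind K D])
  then show ?thesis by (rule indep_vars_compose2) (rule F)
qed

lemma indep_pair:
  assumes Q: "prob_space Q" and ind: "prob_space.indep_vars Q (\<lambda>_. borel) X I"
    and a: "a \<in> I" and b: "b \<in> I" and ab: "a \<noteq> b"
  shows "prob_space.indep_var Q borel (X a) borel (X b)"
proof -
  interpret prob_space Q by (rule Q)
  have "indep_var (PiM {a} (\<lambda>_. borel)) (\<lambda>x. restrict (\<lambda>i. X i x) {a}) (PiM {b} (\<lambda>_. borel)) (\<lambda>x. restrict (\<lambda>i. X i x) {b})"
    using ab a b by (intro indep_var_restrict[OF ind]) auto
  then have "indep_var borel ((\<lambda>f. f a) \<circ> (\<lambda>x. restrict (\<lambda>i. X i x) {a})) borel ((\<lambda>f. f b) \<circ> (\<lambda>x. restrict (\<lambda>i. X i x) {b}))"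
    by (rule indep_var_compose) auto
  moreover have "((\<lambda>f. f a) \<circ> (\<lambda>x. restrict (\<lambda>i. X i x) {a})) = X a" by (auto simp: fun_eq_iff)
  moreover have "((\<lambda>f. f b) \<circ> (\<lambda>x. restrict (\<lambda>i. X i x) {b})) = X b" by (auto simp: fun_eq_iff)
  ultimately show ?thesis by simp
qed

lemma mgf_sign:
  assumes Q: "prob_space Q" and Um: "U \<in> borel_measurable Q"
    and Uv: "AE x in Q. U x = 1 \<or> U x = -1"
    and ind: "prob_space.indep_var Q borel U borel H" and H: "mgf_bd Q H t"
  shows "mgf_bd Q (\<lambda>x. U x * H x) t"
proof -
  interpret prob_space Q by (rule Q)
  have Hm[measurable]: "H \<in> borel_measurable Q" using H by (simp add: mgf_bd_def)
  note Um[measurable]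
  have IU: "integrable Q U"
  proof (rule Bochner_Integration.integrable_bound[of _ "\<lambda>x. 1::real"])
    show "integrable Q (\<lambda>x. 1::real)" by simp
    show "AE x in Q. norm (U x) \<le> norm (1::real)" using Uv by eventually_elim auto
  qed simp
  show ?thesis unfolding mgf_bd_def
  proof (intro conjI allI)
    show "(\<lambda>x. U x * H x) \<in> borel_measurable Q" by measurable
    fix l :: real
    define p1 where "p1 = (\<lambda>x. (1 + U x) / 2)"
    define p2 where "p2 = (\<lambda>x. (1 - U x) / 2)"
    have p1m[measurable]: "p1 \<in> borel_measurable Q" unfolding p1_def by measurable
    have p2m[measurable]: "p2 \<in> borel_measurable Q" unfolding p2_def by measurable
    have ae: "AE x in Q. exp (l * (U x * H x)) = p1 x * exp (l * H x) + p2 x * exp ((- l) * H x)"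
      using Uv by eventually_elim (auto simp: p1_def p2_def)
    have i1: "indep_var borel p1 borel (\<lambda>x. exp (l * H x))"
      using indep_var_compose[OF ind, of "\<lambda>u. (1 + u) / 2" borel "\<lambda>h. exp (l * h)" borel]
      by (auto simp: comp_def p1_def)
    have i2: "indep_var borel p2 borel (\<lambda>x. exp ((- l) * H x))"
      using indep_var_compose[OF ind, of "\<lambda>u. (1 - u) / 2" borel "\<lambda>h. exp ((- l) * h)" borel]
      by (auto simp: comp_def p2_def)
    have IH1: "integrable Q (\<lambda>x. exp (l * H x))" using H unfolding mgf_bd_def by blast
    have IH2: "integrable Q (\<lambda>x. exp ((- l) * H x))" using H unfolding mgf_bd_def by blast
    have Ip1: "integrable Q p1" unfolding p1_def using IU by (intro integrable_divide) auto
    have Ip2: "integrable Q p2" unfolding p2_def using IU by (intro integrable_divide) auto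
    have e1: "(\<integral>x. p1 x * exp (l * H x) \<partial>Q) = (\<integral>x. p1 x \<partial>Q) * (\<integral>x. exp (l * H x) \<partial>Q)"
      by (rule indep_var_lebesgue_integral[OF i1 Ip1 IH1])
    have j1: "integrable Q (\<lambda>x. p1 x * exp (l * H x))"
      by (rule indep_var_integrable[OF i1 Ip1 IH1])
    have e2: "(\<integral>x. p2 x * exp ((- l) * H x) \<partial>Q) = (\<integral>x. p2 x \<partial>Q) * (\<integral>x. exp ((- l) * H x) \<partial>Q)"
      by (rule indep_var_lebesgue_integral[OF i2 Ip2 IH2])
    have j2: "integrable Q (\<lambda>x. p2 x * exp ((- l) * H x))"
      by (rule indep_var_integrable[OF i2 Ip2 IH2])
    have Isum: "integrable Q (\<lambda>x. p1 x * exp (l * H x) + p2 x * exp ((- l) * H x))" using j1 j2 by simp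
    show "integrable Q (\<lambda>x. exp (l * (U x * H x)))"
    proof (rule integrable_cong_AE_imp[OF Isum])
      show "(\<lambda>x. exp (l * (U x * H x))) \<in> borel_measurable Q" by measurable
      show "AE x in Q. p1 x * exp (l * H x) + p2 x * exp ((- l) * H x) = exp (l * (U x * H x))"
        using ae by eventually_elim simp
    qed
    have "(\<integral>x. exp (l * (U x * H x)) \<partial>Q) = (\<integral>x. p1 x * exp (l * H x) + p2 x * exp ((- l) * H x) \<partial>Q)"
    proof (rule integral_cong_AE)
      show "AE x in Q. exp (l * (U x * H x)) = p1 x * exp (l * H x) + p2 x * exp ((- l) * H x)" by (rule ae)
    qed measurable
    also have "\<dots> = (\<integral>x. p1 x \<partial>Q) * (\<integral>x. exp (l * H x) \<partial>Q) + (\<integral>x. p2 x \<partial>Q) * (\<integral>x. exp ((- l) * H x) \<partial>Q)"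
      using j1 j2 e1 e2 by simp
    also have "\<dots> \<le> (\<integral>x. p1 x \<partial>Q) * exp (l\<^sup>2 * t\<^sup>2 / 2) + (\<integral>x. p2 x \<partial>Q) * exp ((- l)\<^sup>2 * t\<^sup>2 / 2)"
    proof (intro add_mono mult_left_mono)
      show "(\<integral>x. exp (l * H x) \<partial>Q) \<le> exp (l\<^sup>2 * t\<^sup>2 / 2)" using H by (simp add: mgf_bd_def)
      show "(\<integral>x. exp ((- l) * H x) \<partial>Q) \<le> exp ((- l)\<^sup>2 * t\<^sup>2 / 2)" using H unfolding mgf_bd_def by blast
      show "0 \<le> (\<integral>x. p1 x \<partial>Q)" by (rule integral_nonneg_AE) (use Uv in \<open>eventually_elim, auto simp: p1_def\<close>)
      show "0 \<le> (\<integral>x. p2 x \<partial>Q)" by (rule integral_nonneg_AE) (use Uv in \<open>eventually_elim, auto simp: p2_def\<close>)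
    qed
    also have "\<dots> = ((\<integral>x. p1 x \<partial>Q) + (\<integral>x. p2 x \<partial>Q)) * exp (l\<^sup>2 * t\<^sup>2 / 2)" by (simp add: algebra_simps)
    also have "(\<integral>x. p1 x \<partial>Q) + (\<integral>x. p2 x \<partial>Q) = (\<integral>x. p1 x + p2 x \<partial>Q)" using Ip1 Ip2 by simp
    also have "\<dots> = 1" by (simp add: p1_def p2_def prob_space add_divide_distrib[symmetric])
    finally show "(\<integral>x. exp (l * (U x * H x)) \<partial>Q) \<le> exp (l\<^sup>2 * t\<^sup>2 / 2)" by simp
  qed
qed

lemma mgf_lin_sum:
  assumes Q: "prob_space Q" and I: "finite I" and ind: "prob_space.indep_vars Q (\<lambda>_. borel) B I"
    and Bm: "\<And>i. i \<in> I \<Longrightarrow> mgf_bd Q (B i) t"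
  shows "mgf_bd Q (\<lambda>x. \<Sum>i\<in>I. c i * B i x) (t * sqrt (\<Sum>i\<in>I. (c i)\<^sup>2))"
proof -
  interpret prob_space Q by (rule Q)
  have Bmeas[measurable]: "i \<in> I \<Longrightarrow> B i \<in> borel_measurable Q" for i using Bm by (simp add: mgf_bd_def)
  show ?thesis unfolding mgf_bd_def
  proof (intro conjI allI)
    show "(\<lambda>x. \<Sum>i\<in>I. c i * B i x) \<in> borel_measurable Q" by measurable
    fix l :: real
    have eq: "exp (l * (\<Sum>i\<in>I. c i * B i x)) = (\<Prod>i\<in>I. exp ((l * c i) * B i x))" for x
      using I by (simp add: sum_distrib_left exp_sum mult.assoc)
    have ind2: "indep_vars (\<lambda>_. borel) (\<lambda>i x. exp ((l * c i) * B i x)) I"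
      by (rule indep_vars_compose2[OF ind]) auto
    have Ii: "i \<in> I \<Longrightarrow> integrable Q (\<lambda>x. exp ((l * c i) * B i x))" for i using Bm by (simp add: mgf_bd_def)
    show "integrable Q (\<lambda>x. exp (l * (\<Sum>i\<in>I. c i * B i x)))"
      unfolding eq by (rule indep_vars_integrable[OF I ind2 Ii])
    have "(\<integral>x. exp (l * (\<Sum>i\<in>I. c i * B i x)) \<partial>Q) = (\<Prod>i\<in>I. \<integral>x. exp ((l * c i) * B i x) \<partial>Q)"
      unfolding eq by (rule indep_vars_lebesgue_integral[OF I ind2 Ii])
    also have "\<dots> \<le> (\<Prod>i\<in>I. exp ((l * c i)\<^sup>2 * t\<^sup>2 / 2))"
    proof (rule prod_mono)
      fix i assume i: "i \<in> I"
      show "0 \<le> (\<integral>x. exp ((l * c i) * B i x) \<partial>Q) \<and> (\<integral>x. exp ((l * c i) * B i x) \<partial>Q) \<le> exp ((l * c i)\<^sup>2 * t\<^sup>2 / 2)"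
        using Bm[OF i] by (auto simp: mgf_bd_def intro: integral_nonneg_AE)
    qed
    also have "\<dots> = exp (\<Sum>i\<in>I. (l * c i)\<^sup>2 * t\<^sup>2 / 2)" using I by (simp add: exp_sum)
    also have "(\<Sum>i\<in>I. (l * c i)\<^sup>2 * t\<^sup>2 / 2) = l\<^sup>2 * (t * sqrt (\<Sum>i\<in>I. (c i)\<^sup>2))\<^sup>2 / 2"
      by (simp add: power_mult_distrib sum_distrib_left sum_divide_distrib[symmetric] sum_distrib_right[symmetric] algebra_simps sum_nonneg)
    finally show "(\<integral>x. exp (l * (\<Sum>i\<in>I. c i * B i x)) \<partial>Q) \<le> exp (l\<^sup>2 * (t * sqrt (\<Sum>i\<in>I. (c i)\<^sup>2))\<^sup>2 / 2)" .
  qed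
qed

lemma two_pow_le_three: "q \<ge> 2 \<Longrightarrow> 2 * 2 ^ q \<le> (3::real) ^ q"
proof (induction q rule: dec_induct)
  case base then show ?case by simp
next
  case (step n)
  have A: "2 * (2 * 2 ^ n) \<le> 2 * (3::real) ^ n" by (rule mult_left_mono[OF step.IH]) simp
  have B: "2 * (3::real) ^ n \<le> 3 * 3 ^ n" by simp
  have C: "2 * (2::real) ^ Suc n = 2 * (2 * 2 ^ n)" "(3::real) ^ Suc n = 3 * 3 ^ n" by simp_all
  show ?case unfolding C using A B by linarith
qed

lemma AR_bound:
  assumes Q: "prob_space Q" and I: "finite I" and ind: "prob_space.indep_vars Q (\<lambda>_. borel) B I"
    and Bm: "\<And>i. i \<in> I \<Longrightarrow> mgf_bd Q (B i) t" and t: "t > 0"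
  shows "mom_bd Q (\<lambda>x. (\<Sum>i\<in>I. c i * B i x)\<^sup>2 - (\<Sum>i\<in>I. (c i)\<^sup>2 * (B i x)\<^sup>2)) (3 * t\<^sup>2 * (\<Sum>i\<in>I. (c i)\<^sup>2))"
proof -
  interpret prob_space Q by (rule Q)
  have Bmeas[measurable]: "i \<in> I \<Longrightarrow> B i \<in> borel_measurable Q" for i using Bm by (simp add: mgf_bd_def)
  define G where "G = (\<Sum>i\<in>I. (c i)\<^sup>2)"
  define Z where "Z x = (\<Sum>i\<in>I. c i * B i x)" for x
  define S where "S x = (\<Sum>i\<in>I. (c i)\<^sup>2 * (B i x)\<^sup>2)" for x
  have Zm[measurable]: "Z \<in> borel_measurable Q" unfolding Z_def[abs_def] by measurable
  have Sm[measurable]: "S \<in> borel_measurable Q" unfolding S_def[abs_def] by measurable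
  have G0: "G \<ge> 0" unfolding G_def by (simp add: sum_nonneg)
  show ?thesis
  proof (cases "G = 0")
    case True
    then have c0: "i \<in> I \<Longrightarrow> c i = 0" for i using I unfolding G_def by (subst (asm) sum_nonneg_eq_0_iff) auto
    have e: "3 * t\<^sup>2 * (\<Sum>i\<in>I. (c i)\<^sup>2) = 0" using True by (simp add: G_def)
    show ?thesis unfolding e
      by (rule mom_bd_dom[OF mom_bd_zero]) (use c0 in \<open>auto\<close>)
  next
    case False
    then have Gp: "G > 0" using G0 by simp
    have tz: "t * sqrt G > 0" using t Gp by simp
    have Zmgf: "mgf_bd Q Z (t * sqrt G)" unfolding Z_def[abs_def] G_def
      by (rule mgf_lin_sum[OF Q I ind Bm])
    have ZZ: "mom_bd Q (\<lambda>x. (Z x)\<^sup>2) (2 * t\<^sup>2 * G)"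
      using mgf_sq[OF Q Zmgf tz] Gp by (simp add: power_mult_distrib mult.assoc)
    have Zv: "(\<integral>x. (Z x)\<^sup>2 \<partial>Q) \<le> t\<^sup>2 * G" and IZ2: "integrable Q (\<lambda>x. (Z x)\<^sup>2)"
      using mgf_var[OF Q Zmgf] Gp by (auto simp: power_mult_distrib)
    have SS: "mom_bd Q S (2 * t\<^sup>2 * G)"
    proof -
      have "mom_bd Q (\<lambda>x. \<Sum>i\<in>I. (c i)\<^sup>2 * (B i x)\<^sup>2) (\<Sum>i\<in>I. \<bar>(c i)\<^sup>2\<bar> * (2 * t\<^sup>2))"
        using mgf_sq[OF Q Bm t] by (intro mom_bd_sum[OF I] mom_bd_scale) auto
      moreover have "(\<Sum>i\<in>I. \<bar>(c i)\<^sup>2\<bar> * (2 * t\<^sup>2)) = 2 * t\<^sup>2 * G"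
        unfolding G_def by (simp add: sum_distrib_right[symmetric] mult.commute)
      ultimately show ?thesis unfolding S_def[abs_def] by metis
    qed
    have IB2: "i \<in> I \<Longrightarrow> integrable Q (\<lambda>x. (B i x)\<^sup>2)" for i using mgf_var[OF Q Bm] by auto
    have Bv: "i \<in> I \<Longrightarrow> (\<integral>x. (B i x)\<^sup>2 \<partial>Q) \<le> t\<^sup>2" for i using mgf_var[OF Q Bm] by auto
    have IS: "integrable Q S" unfolding S_def[abs_def] using IB2 by auto
    have ES: "(\<integral>x. S x \<partial>Q) \<le> t\<^sup>2 * G"
    proof -
      have "(\<integral>x. S x \<partial>Q) = (\<Sum>i\<in>I. (c i)\<^sup>2 * (\<integral>x. (B i x)\<^sup>2 \<partial>Q))"
        unfolding S_def using IB2 by (subst Bochner_Integration.integral_sum) auto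
      also have "\<dots> \<le> (\<Sum>i\<in>I. (c i)\<^sup>2 * t\<^sup>2)" using Bv by (intro sum_mono mult_left_mono) auto
      also have "\<dots> = t\<^sup>2 * G" unfolding G_def by (simp add: sum_distrib_left mult.commute)
      finally show ?thesis .
    qed
    have S0: "S x \<ge> 0" for x unfolding S_def by (intro sum_nonneg) auto
    have pw1: "\<bar>(Z x)\<^sup>2 - S x\<bar> \<le> (Z x)\<^sup>2 + S x" for x using S0[of x] by (simp add: abs_le_iff)
    have pwq: "\<bar>(Z x)\<^sup>2 - S x\<bar> ^ q \<le> \<bar>(Z x)\<^sup>2\<bar> ^ q + \<bar>S x\<bar> ^ q" for x q
    proof (cases "(Z x)\<^sup>2 \<ge> S x")
      case True
      then have "\<bar>(Z x)\<^sup>2 - S x\<bar> ^ q \<le> \<bar>(Z x)\<^sup>2\<bar> ^ q" using S0[of x] by (intro power_mono) auto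
      then show ?thesis by (simp add: add_increasing2)
    next
      case False
      then have "\<bar>(Z x)\<^sup>2 - S x\<bar> ^ q \<le> \<bar>S x\<bar> ^ q" using S0[of x] by (intro power_mono) auto
      then show ?thesis by (simp add: add_increasing)
    qed
    have "mom_bd Q (\<lambda>x. (Z x)\<^sup>2 - S x) (3 * t\<^sup>2 * G)"
      unfolding mom_bd_def
    proof (rule conjI, measurable, intro allI impI)
      fix q :: nat assume q: "q \<ge> 1"
      have IZq: "integrable Q (\<lambda>x. \<bar>(Z x)\<^sup>2\<bar> ^ q)" and EZq: "(\<integral>x. \<bar>(Z x)\<^sup>2\<bar> ^ q \<partial>Q) \<le> fact q * (2 * t\<^sup>2 * G) ^ q"
        using ZZ q by (auto simp: mom_bd_def)
      have ISq: "integrable Q (\<lambda>x. \<bar>S x\<bar> ^ q)" and ESq: "(\<integral>x. \<bar>S x\<bar> ^ q \<partial>Q) \<le> fact q * (2 * t\<^sup>2 * G) ^ q"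
        using SS q by (auto simp: mom_bd_def)
      have IB: "integrable Q (\<lambda>x. \<bar>(Z x)\<^sup>2\<bar> ^ q + \<bar>S x\<bar> ^ q)" using IZq ISq by simp
      have IA: "integrable Q (\<lambda>x. \<bar>(Z x)\<^sup>2 - S x\<bar> ^ q)"
      proof (rule Bochner_Integration.integrable_bound[OF IB])
        show "(\<lambda>x. \<bar>(Z x)\<^sup>2 - S x\<bar> ^ q) \<in> borel_measurable Q" by measurable
        show "AE x in Q. norm (\<bar>(Z x)\<^sup>2 - S x\<bar> ^ q) \<le> norm (\<bar>(Z x)\<^sup>2\<bar> ^ q + \<bar>S x\<bar> ^ q)"
          using pwq by (auto intro!: AE_I2 order.trans[OF _ abs_ge_self])
      qed
      show "integrable Q (\<lambda>x. \<bar>(Z x)\<^sup>2 - S x\<bar> ^ q) \<and> (\<integral>x. \<bar>(Z x)\<^sup>2 - S x\<bar> ^ q \<partial>Q) \<le> fact q * (3 * t\<^sup>2 * G) ^ q"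
      proof (cases "q = 1")
        case True
        have "(\<integral>x. \<bar>(Z x)\<^sup>2 - S x\<bar> \<partial>Q) \<le> (\<integral>x. (Z x)\<^sup>2 + S x \<partial>Q)"
          using IA IZ2 IS pw1 True by (intro integral_mono) auto
        also have "\<dots> = (\<integral>x. (Z x)\<^sup>2 \<partial>Q) + (\<integral>x. S x \<partial>Q)" using IZ2 IS by simp
        also have "\<dots> \<le> t\<^sup>2 * G + t\<^sup>2 * G" using Zv ES by linarith
        also have "\<dots> \<le> 3 * t\<^sup>2 * G" using Gp by simp
        finally show ?thesis using IA True by simp
      next
        case False
        then have q2: "q \<ge> 2" using q by simp
        have "(\<integral>x. \<bar>(Z x)\<^sup>2 - S x\<bar> ^ q \<partial>Q) \<le> (\<integral>x. \<bar>(Z x)\<^sup>2\<bar> ^ q + \<bar>S x\<bar> ^ q \<partial>Q)"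
          by (rule integral_mono[OF IA IB pwq])
        also have "\<dots> = (\<integral>x. \<bar>(Z x)\<^sup>2\<bar> ^ q \<partial>Q) + (\<integral>x. \<bar>S x\<bar> ^ q \<partial>Q)" using IZq ISq by simp
        also have "\<dots> \<le> fact q * (2 * (2 * t\<^sup>2 * G) ^ q)" using EZq ESq by simp
        also have "\<dots> \<le> fact q * (3 * t\<^sup>2 * G) ^ q"
        proof -
          have "2 * (2 * t\<^sup>2 * G) ^ q = (2 * 2 ^ q) * (t\<^sup>2 * G) ^ q" by (simp add: power_mult_distrib)
          also have "\<dots> \<le> 3 ^ q * (t\<^sup>2 * G) ^ q" using two_pow_le_three[OF q2] Gp by (intro mult_right_mono) auto
          also have "\<dots> = (3 * t\<^sup>2 * G) ^ q" by (simp add: power_mult_distrib)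
          finally show ?thesis by (intro mult_left_mono) auto
        qed
        finally show ?thesis using IA by simp
      qed
    qed
    then show ?thesis by (simp add: Z_def S_def G_def)
  qed
qed

lemma cross_bound:
  assumes NN: "mom_bd Q (\<lambda>x. (N x)\<^sup>2) (2 * \<nu>\<^sup>2)" and ZZ: "mom_bd Q (\<lambda>x. (Z x)\<^sup>2) (2 * \<tau>\<^sup>2)"
    and \<nu>: "\<nu> > 0" and \<tau>: "\<tau> \<ge> 0" and Nm: "N \<in> borel_measurable Q" and Zm: "Z \<in> borel_measurable Q"
  shows "mom_bd Q (\<lambda>x. 2 * N x * Z x) (4 * \<nu> * \<tau>)"
proof -
  have A: "mom_bd Q (\<lambda>x. 2 * N x * Z x) (2 * \<alpha> * \<nu>\<^sup>2 + 2 * \<tau>\<^sup>2 / \<alpha>)" if a: "\<alpha> > 0" for \<alpha>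
  proof -
    have "mom_bd Q (\<lambda>x. \<alpha> * (N x)\<^sup>2 + (1 / \<alpha>) * (Z x)\<^sup>2) (\<bar>\<alpha>\<bar> * (2 * \<nu>\<^sup>2) + \<bar>1 / \<alpha>\<bar> * (2 * \<tau>\<^sup>2))"
      by (intro mom_bd_add mom_bd_scale NN ZZ)
    moreover have "\<bar>\<alpha>\<bar> * (2 * \<nu>\<^sup>2) + \<bar>1 / \<alpha>\<bar> * (2 * \<tau>\<^sup>2) = 2 * \<alpha> * \<nu>\<^sup>2 + 2 * \<tau>\<^sup>2 / \<alpha>"
      using a by simp
    ultimately have m: "mom_bd Q (\<lambda>x. \<alpha> * (N x)\<^sup>2 + (1 / \<alpha>) * (Z x)\<^sup>2) (2 * \<alpha> * \<nu>\<^sup>2 + 2 * \<tau>\<^sup>2 / \<alpha>)"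
      by metis
    show ?thesis
    proof (rule mom_bd_dom[OF m])
      show "(\<lambda>x. 2 * N x * Z x) \<in> borel_measurable Q" using Nm Zm by measurable
      fix x
      have "0 \<le> (\<alpha> * \<bar>N x\<bar> - \<bar>Z x\<bar>)\<^sup>2 / \<alpha>" using a by simp
      also have "(\<alpha> * \<bar>N x\<bar> - \<bar>Z x\<bar>)\<^sup>2 / \<alpha> = \<alpha> * (N x)\<^sup>2 + (1 / \<alpha>) * (Z x)\<^sup>2 - 2 * \<bar>N x\<bar> * \<bar>Z x\<bar>"
        using a by (simp add: power2_eq_square field_simps)
      finally have "2 * \<bar>N x\<bar> * \<bar>Z x\<bar> \<le> \<alpha> * (N x)\<^sup>2 + (1 / \<alpha>) * (Z x)\<^sup>2" by simp
      then show "\<bar>2 * N x * Z x\<bar> \<le> \<bar>\<alpha> * (N x)\<^sup>2 + (1 / \<alpha>) * (Z x)\<^sup>2\<bar>"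
        by (simp add: abs_mult)
    qed
  qed
  show ?thesis
  proof (rule mom_bd_limit)
    show "4 * \<nu> * \<tau> \<ge> 0" using \<nu> \<tau> by simp
    fix c' assume c': "c' > 4 * \<nu> * \<tau>"
    show "mom_bd Q (\<lambda>x. 2 * N x * Z x) c'"
    proof (cases "\<tau> = 0")
      case True
      have c'0: "c' > 0" using c' True by simp
      have "mom_bd Q (\<lambda>x. 2 * N x * Z x) (2 * (c' / (2 * \<nu>\<^sup>2)) * \<nu>\<^sup>2 + 2 * \<tau>\<^sup>2 / (c' / (2 * \<nu>\<^sup>2)))"
        using c'0 \<nu> by (intro A) simp
      then show ?thesis using True \<nu> by simp
    next
      case False
      then have tp: "\<tau> > 0" using \<tau> by simp
      have "mom_bd Q (\<lambda>x. 2 * N x * Z x) (2 * (\<tau> / \<nu>) * \<nu>\<^sup>2 + 2 * \<tau>\<^sup>2 / (\<tau> / \<nu>))"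
        using tp \<nu> by (intro A) simp
      moreover have "2 * (\<tau> / \<nu>) * \<nu>\<^sup>2 + 2 * \<tau>\<^sup>2 / (\<tau> / \<nu>) = 4 * \<nu> * \<tau>"
        using tp \<nu> by (simp add: power2_eq_square field_simps)
      ultimately show ?thesis using c' by (auto intro: mom_bd_mono)
    qed
  qed
qed

lemma mom_bd_integrable:
  assumes m: "mom_bd Q X c" shows "integrable Q X"
proof -
  have "integrable Q (\<lambda>x. \<bar>X x\<bar> ^ 1)" and Xm: "X \<in> borel_measurable Q" using m by (auto simp: mom_bd_def)
  then show ?thesis by (simp add: integrable_abs_iff)
qed

lemma mom_bd_cong:
  assumes m: "mom_bd Q X c" and Y: "Y \<in> borel_measurable Q" and e: "\<And>x. x \<in> space Q \<Longrightarrow> Y x = X x"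
  shows "mom_bd Q Y c"
  using m Y by (rule mom_bd_dom) (simp add: e)

lemma half_core:
  fixes Y :: "'b \<Rightarrow> 'a \<Rightarrow> real" and d :: "'b \<Rightarrow> real"
  assumes Q: "prob_space Q" and J: "finite J" and n0: "n0 \<notin> J"
    and ind: "prob_space.indep_vars Q (\<lambda>_. borel) Y (insert n0 J)"
    and Bm: "\<And>j. j \<in> J \<Longrightarrow> mgf_bd Q (Y j) t" and Nm: "mgf_bd Q (Y n0) \<nu>" and t: "t > 0" and \<nu>: "\<nu> > 0"
    and mB: "\<And>j. j \<in> J \<Longrightarrow> (\<integral>x. Y j x \<partial>Q) = 0" and mN: "(\<integral>x. Y n0 x \<partial>Q) = 0"
  defines "Z \<equiv> \<lambda>x. \<Sum>j\<in>J. d j * Y j x" and "G \<equiv> \<Sum>j\<in>J. (d j)\<^sup>2"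
    and "H \<equiv> \<lambda>x. (\<Sum>j\<in>J. d j * Y j x)\<^sup>2 - (\<Sum>j\<in>J. (d j)\<^sup>2 * (Y j x)\<^sup>2) + 2 * Y n0 x * (\<Sum>j\<in>J. d j * Y j x) + (Y n0 x)\<^sup>2"
  shows "integrable Q H \<and> mom_bd Q (\<lambda>x. H x - (\<integral>x. H x \<partial>Q)) (3 * t\<^sup>2 * G + 4 * \<nu> * (t * sqrt G) + 2 * \<nu>\<^sup>2)"
proof -
  interpret prob_space Q by (rule Q)
  have Ym[measurable]: "j \<in> J \<Longrightarrow> Y j \<in> borel_measurable Q" for j using Bm by (simp add: mgf_bd_def)
  have Nmeas[measurable]: "Y n0 \<in> borel_measurable Q" using Nm by (simp add: mgf_bd_def)
  have Zm[measurable]: "Z \<in> borel_measurable Q" unfolding Z_def by measurable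
  have indJ: "indep_vars (\<lambda>_. borel) Y J" using ind by (rule indep_vars_subset) auto
  have G0: "G \<ge> 0" unfolding G_def by (simp add: sum_nonneg)
  define A where "A x = (Z x)\<^sup>2 - (\<Sum>j\<in>J. (d j)\<^sup>2 * (Y j x)\<^sup>2)" for x
  have AA: "mom_bd Q A (3 * t\<^sup>2 * G)"
    unfolding A_def[abs_def] Z_def G_def by (rule AR_bound[OF Q J indJ Bm t])
  have IY: "j \<in> J \<Longrightarrow> integrable Q (Y j)" and IY2: "j \<in> J \<Longrightarrow> integrable Q (\<lambda>x. (Y j x)\<^sup>2)" for j
    using mgf_var[OF Q Bm] by auto
  have IN: "integrable Q (Y n0)" and IN2: "integrable Q (\<lambda>x. (Y n0 x)\<^sup>2)" using mgf_var[OF Q Nm] by auto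
  have ZZ: "mom_bd Q (\<lambda>x. (Z x)\<^sup>2) (2 * (t * sqrt G)\<^sup>2)"
  proof (cases "G = 0")
    case True
    then have d0: "j \<in> J \<Longrightarrow> d j = 0" for j using J unfolding G_def by (subst (asm) sum_nonneg_eq_0_iff) auto
    have e: "2 * (t * sqrt G)\<^sup>2 = 0" using True by simp
    show ?thesis unfolding e
      by (intro mom_bd_cong[OF mom_bd_zero]) (auto simp: Z_def d0)
  next
    case False
    then have tz: "t * sqrt G > 0" using G0 t by simp
    have "mgf_bd Q Z (t * sqrt G)" unfolding Z_def G_def by (rule mgf_lin_sum[OF Q J indJ Bm])
    from mgf_sq[OF Q this tz] show ?thesis by simp
  qed
  have NN: "mom_bd Q (\<lambda>x. (Y n0 x)\<^sup>2) (2 * \<nu>\<^sup>2)" using mgf_sq[OF Q Nm \<nu>] by simp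
  have NC: "mom_bd Q (\<lambda>x. (Y n0 x)\<^sup>2 - (\<integral>x. (Y n0 x)\<^sup>2 \<partial>Q)) (2 * \<nu>\<^sup>2)" using mgf_sq[OF Q Nm \<nu>] by simp
  have CR: "mom_bd Q (\<lambda>x. 2 * Y n0 x * Z x) (4 * \<nu> * (t * sqrt G))"
    using t G0 by (intro cross_bound[OF NN ZZ \<nu>]) auto
  have pairE: "(\<integral>x. Y j x * Y k x \<partial>Q) = 0" and pairI: "integrable Q (\<lambda>x. Y j x * Y k x)"
    if jk: "j \<in> insert n0 J" "k \<in> J" "j \<noteq> k" and mj: "(\<integral>x. Y j x \<partial>Q) = 0" and ij: "integrable Q (Y j)" for j k
  proof -
    have iv: "indep_var borel (Y j) borel (Y k)" using jk by (intro indep_pair[OF Q ind]) auto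
    show "(\<integral>x. Y j x * Y k x \<partial>Q) = 0"
      using indep_var_lebesgue_integral[OF iv ij IY[OF jk(2)]] mj by simp
    show "integrable Q (\<lambda>x. Y j x * Y k x)" by (rule indep_var_integrable[OF iv ij IY[OF jk(2)]])
  qed
  have prodI: "integrable Q (\<lambda>x. Y j x * Y k x)" if "j \<in> J" "k \<in> J" for j k
  proof (cases "j = k")
    case True then show ?thesis using IY2[OF that(1)] by (simp add: power2_eq_square)
  next
    case False then show ?thesis using that IY mB by (intro pairI) auto
  qed
  have prodE: "(\<integral>x. Y j x * Y k x \<partial>Q) = (if j = k then (\<integral>x. (Y j x)\<^sup>2 \<partial>Q) else 0)" if "j \<in> J" "k \<in> J" for j k
  proof (cases "j = k")
    case True then show ?thesis by (simp add: power2_eq_square)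
  next
    case False then show ?thesis using that IY mB by (simp add: pairE)
  qed
  have Zsq: "(Z x)\<^sup>2 = (\<Sum>j\<in>J. \<Sum>k\<in>J. d j * d k * (Y j x * Y k x))" for x
    unfolding Z_def power2_eq_square sum_product by (simp add: algebra_simps)
  have IZ2: "integrable Q (\<lambda>x. (Z x)\<^sup>2)" unfolding Zsq using prodI by auto
  have EZ2: "(\<integral>x. (Z x)\<^sup>2 \<partial>Q) = (\<Sum>j\<in>J. (d j)\<^sup>2 * (\<integral>x. (Y j x)\<^sup>2 \<partial>Q))"
  proof -
    have "(\<integral>x. (Z x)\<^sup>2 \<partial>Q) = (\<Sum>j\<in>J. \<Sum>k\<in>J. d j * d k * (\<integral>x. Y j x * Y k x \<partial>Q))"
      unfolding Zsq using prodI
      by (simp add: Bochner_Integration.integral_sum Bochner_Integration.integrable_sum)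
    also have "\<dots> = (\<Sum>j\<in>J. \<Sum>k\<in>J. d j * d k * (if j = k then (\<integral>x. (Y j x)\<^sup>2 \<partial>Q) else 0))"
      by (intro sum.cong refl) (simp add: prodE)
    also have "\<dots> = (\<Sum>j\<in>J. (d j)\<^sup>2 * (\<integral>x. (Y j x)\<^sup>2 \<partial>Q))"
      using J by (simp add: if_distrib power2_eq_square cong: if_cong)
    finally show ?thesis .
  qed
  have ISS: "integrable Q (\<lambda>x. \<Sum>j\<in>J. (d j)\<^sup>2 * (Y j x)\<^sup>2)" using IY2 by auto
  have EA: "(\<integral>x. A x \<partial>Q) = 0"
  proof -
    have "(\<integral>x. A x \<partial>Q) = (\<integral>x. (Z x)\<^sup>2 \<partial>Q) - (\<integral>x. (\<Sum>j\<in>J. (d j)\<^sup>2 * (Y j x)\<^sup>2) \<partial>Q)"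
      unfolding A_def using IZ2 ISS by simp
    also have "(\<integral>x. (\<Sum>j\<in>J. (d j)\<^sup>2 * (Y j x)\<^sup>2) \<partial>Q) = (\<Sum>j\<in>J. (d j)\<^sup>2 * (\<integral>x. (Y j x)\<^sup>2 \<partial>Q))"
      using IY2 by (simp add: Bochner_Integration.integral_sum)
    finally show ?thesis using EZ2 by simp
  qed
  have eqNZ: "(\<lambda>x. Y n0 x * Z x) = (\<lambda>x. \<Sum>j\<in>J. d j * (Y n0 x * Y j x))"
    by (auto simp: Z_def sum_distrib_left algebra_simps)
  have INZ: "integrable Q (\<lambda>x. Y n0 x * Z x)"
    unfolding eqNZ using n0 IN mN
    by (intro Bochner_Integration.integrable_sum integrable_mult_right pairI) auto
  have ENZ: "(\<integral>x. Y n0 x * Z x \<partial>Q) = 0"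
  proof -
    have "(\<integral>x. Y n0 x * Z x \<partial>Q) = (\<integral>x. (\<Sum>j\<in>J. d j * (Y n0 x * Y j x)) \<partial>Q)"
      unfolding Z_def by (simp add: sum_distrib_left algebra_simps)
    also have "\<dots> = (\<Sum>j\<in>J. d j * (\<integral>x. Y n0 x * Y j x \<partial>Q))"
      using n0 IN mN by (subst Bochner_Integration.integral_sum) (auto intro!: pairI)
    also have "\<dots> = 0"
    proof (intro sum.neutral ballI)
      fix j assume j: "j \<in> J"
      then have "n0 \<noteq> j" using n0 by auto
      then show "d j * (\<integral>x. Y n0 x * Y j x \<partial>Q) = 0" using pairE[of n0 j] j IN mN by simp
    qed
    finally show ?thesis .
  qed
  have IA: "integrable Q A" by (rule mom_bd_integrable[OF AA])
  have Heq: "H x = A x + 2 * Y n0 x * Z x + (Y n0 x)\<^sup>2" for x unfolding H_def A_def Z_def by simp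
  have IH: "integrable Q H" unfolding Heq[abs_def] using IA INZ IN2 by (simp add: mult.assoc)
  have EH: "(\<integral>x. H x \<partial>Q) = (\<integral>x. (Y n0 x)\<^sup>2 \<partial>Q)"
    unfolding Heq[abs_def] using IA INZ IN2 EA ENZ by (simp add: mult.assoc)
  have "mom_bd Q (\<lambda>x. A x + 2 * Y n0 x * Z x + ((Y n0 x)\<^sup>2 - (\<integral>x. (Y n0 x)\<^sup>2 \<partial>Q)))
          (3 * t\<^sup>2 * G + 4 * \<nu> * (t * sqrt G) + 2 * \<nu>\<^sup>2)"
    by (intro mom_bd_add AA CR NC)
  then have "mom_bd Q (\<lambda>x. H x - (\<integral>x. H x \<partial>Q)) (3 * t\<^sup>2 * G + 4 * \<nu> * (t * sqrt G) + 2 * \<nu>\<^sup>2)"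
  proof (rule mom_bd_cong)
    have [measurable]: "H \<in> borel_measurable Q" using IH by (rule borel_measurable_integrable)
    show "(\<lambda>x. H x - (\<integral>x. H x \<partial>Q)) \<in> borel_measurable Q" by measurable
    fix x show "H x - (\<integral>x. H x \<partial>Q) = A x + 2 * Y n0 x * Z x + ((Y n0 x)\<^sup>2 - (\<integral>x. (Y n0 x)\<^sup>2 \<partial>Q))"
      unfolding EH by (simp add: Heq)
  qed
  then show ?thesis using IH by simp
qed

lemma U_ae:
  fixes U :: "'a \<Rightarrow> real"
  assumes Q: "prob_space Q" and Um: "U \<in> borel_measurable Q"
    and d: "measure Q {x \<in> space Q. U x = 1} = 1/2 \<and> measure Q {x \<in> space Q. U x = -1} = 1/2"
  shows "AE x in Q. U x = 1 \<or> U x = -1"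
proof -
  interpret prob_space Q by (rule Q)
  note Um[measurable]
  have A: "{x \<in> space Q. U x = 1} \<in> sets Q"
  proof -
    have "U -` {1} \<inter> space Q \<in> sets Q" using Um by (rule measurable_sets) simp
    moreover have "U -` {1} \<inter> space Q = {x \<in> space Q. U x = 1}" by auto
    ultimately show ?thesis by simp
  qed
  have B: "{x \<in> space Q. U x = -1} \<in> sets Q"
  proof -
    have "U -` {-1} \<inter> space Q \<in> sets Q" using Um by (rule measurable_sets) simp
    moreover have "U -` {-1} \<inter> space Q = {x \<in> space Q. U x = -1}" by auto
    ultimately show ?thesis by simp
  qed
  have "prob ({x \<in> space Q. U x = 1} \<union> {x \<in> space Q. U x = -1}) = prob {x \<in> space Q. U x = 1} + prob {x \<in> space Q. U x = -1}"
    using A B by (intro finite_measure_Union) auto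
  also have "\<dots> = 1" using d by simp
  finally have "AE x in Q. x \<in> {x \<in> space Q. U x = 1} \<union> {x \<in> space Q. U x = -1}" by (rule AE_prob_1)
  then show ?thesis by eventually_elim auto
qed

lemma half_apply:
  fixes X :: "'i \<Rightarrow> 'a \<Rightarrow> real" and aU aH :: "nat \<Rightarrow> 'i" and aN :: 'i and d :: "nat \<Rightarrow> real" and K :: nat
  assumes Q: "prob_space Q" and ind: "prob_space.indep_vars Q (\<lambda>_. borel) X Iall"
    and inU: "\<And>k. k \<in> {1..K} \<Longrightarrow> aU k \<in> Iall" and inH: "\<And>k. k \<in> {1..K} \<Longrightarrow> aH k \<in> Iall" and inN: "aN \<in> Iall"
    and injU: "inj_on aU {1..K}" and injH: "inj_on aH {1..K}"
    and dUH: "\<And>k k'. aU k \<noteq> aH k'" and dUN: "\<And>k. aU k \<noteq> aN" and dHN: "\<And>k. aH k \<noteq> aN"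
    and Um: "\<And>k. k \<in> {1..K} \<Longrightarrow> X (aU k) \<in> borel_measurable Q"
    and Uae: "\<And>k. k \<in> {1..K} \<Longrightarrow> AE x in Q. X (aU k) x = 1 \<or> X (aU k) x = -1"
    and Hmgf: "\<And>k. k \<in> {1..K} \<Longrightarrow> mgf_bd Q (X (aH k)) t" and Hmean: "\<And>k. k \<in> {1..K} \<Longrightarrow> (\<integral>x. X (aH k) x \<partial>Q) = 0"
    and Nmgf: "mgf_bd Q (X aN) \<nu>" and Nmean: "(\<integral>x. X aN x \<partial>Q) = 0"
    and t: "t > 0" and \<nu>: "\<nu> > 0"
  defines "HH \<equiv> \<lambda>x. (\<Sum>k\<in>{1..K}. d k * (X (aU k) x * X (aH k) x))\<^sup>2
      - (\<Sum>k\<in>{1..K}. (d k)\<^sup>2 * (X (aU k) x * X (aH k) x)\<^sup>2)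
      + 2 * X aN x * (\<Sum>k\<in>{1..K}. d k * (X (aU k) x * X (aH k) x)) + (X aN x)\<^sup>2"
  shows "integrable Q HH \<and> mom_bd Q (\<lambda>x. HH x - (\<integral>x. HH x \<partial>Q))
           (3 * t\<^sup>2 * (\<Sum>k\<in>{1..K}. (d k)\<^sup>2) + 4 * \<nu> * (t * sqrt (\<Sum>k\<in>{1..K}. (d k)\<^sup>2)) + 2 * \<nu>\<^sup>2)"
proof -
  interpret prob_space Q by (rule Q)
  define Y where "Y j x = (if j = 0 then X aN x else X (aU j) x * X (aH j) x)" for j x
  define Kb where "Kb j = (if j = 0 then {aN} else {aU j, aH j})" for j :: nat
  define F where "F j = (if j = 0 then (\<lambda>f::'i \<Rightarrow> real. f aN) else (\<lambda>f. f (aU j) * f (aH j)))" for j :: nat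
  have Kb_sub: "j \<in> insert 0 {1..K} \<Longrightarrow> Kb j \<subseteq> Iall" for j using inU inH inN by (auto simp: Kb_def)
  have disj: "disjoint_family_on Kb (insert 0 {1..K})"
  unfolding disjoint_family_on_def
  proof (intro ballI impI)
    fix j j' assume j: "j \<in> insert 0 {1..K}" and j': "j' \<in> insert 0 {1..K}" and jj: "j \<noteq> j'"
    show "Kb j \<inter> Kb j' = {}"
    proof (cases "j = 0")
      case True
      then have "j' \<noteq> 0" using jj by simp
      then have "Kb j' = {aU j', aH j'}" "Kb j = {aN}" using True by (simp_all add: Kb_def)
      then show ?thesis using dUN[of j'] dHN[of j'] by simp
    next
      case False
      show ?thesis
      proof (cases "j' = 0")
        case True
        then have "Kb j' = {aN}" "Kb j = {aU j, aH j}" using False by (simp_all add: Kb_def)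
        then show ?thesis using dUN[of j] dHN[of j] by simp
      next
        case False': False
        have j1: "j \<in> {1..K}" "j' \<in> {1..K}" using j j' False False' by auto
        have "Kb j' = {aU j', aH j'}" "Kb j = {aU j, aH j}" using False False' by (simp_all add: Kb_def)
        moreover have "aU j \<noteq> aU j'" using inj_onD[OF injU _ j1] jj by blast
        moreover have "aH j \<noteq> aH j'" using inj_onD[OF injH _ j1] jj by blast
        ultimately show ?thesis using dUH[of j j'] dUH[of j' j] by simp
      qed
    qed
  qed
  have Fm: "F j \<in> borel_measurable (PiM (Kb j) (\<lambda>_. borel))" if "j \<in> insert 0 {1..K}" for j
    unfolding F_def Kb_def by (cases "j = 0") auto
  have ind0: "indep_vars (\<lambda>_. borel) (\<lambda>j x. F j (restrict (\<lambda>i. X i x) (Kb j))) (insert 0 {1..K})"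
    by (rule indep_blocks[OF Q ind Kb_sub disj Fm])
  have indY: "indep_vars (\<lambda>_. borel) Y (insert 0 {1..K})"
  proof (rule indep_vars_cong[THEN iffD1, OF refl _ _ ind0])
    fix j assume "j \<in> insert 0 {1..K}"
    show "(\<lambda>x. F j (restrict (\<lambda>i. X i x) (Kb j))) = Y j"
      by (auto simp: F_def Kb_def Y_def fun_eq_iff)
  qed simp
  have Ybm: "j \<in> {1..K} \<Longrightarrow> mgf_bd Q (Y j) t" for j
  proof -
    assume j: "j \<in> {1..K}"
    have iv: "indep_var borel (X (aU j)) borel (X (aH j))"
      using inU[OF j] inH[OF j] dUH by (intro indep_pair[OF Q ind]) auto
    have "mgf_bd Q (\<lambda>x. X (aU j) x * X (aH j) x) t"
      by (rule mgf_sign[OF Q Um[OF j] Uae[OF j] iv Hmgf[OF j]])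
    then show ?thesis using j by (simp add: Y_def[abs_def])
  qed
  have Ymean: "j \<in> {1..K} \<Longrightarrow> (\<integral>x. Y j x \<partial>Q) = 0" for j
  proof -
    assume j: "j \<in> {1..K}"
    have iv: "indep_var borel (X (aU j)) borel (X (aH j))"
      using inU[OF j] inH[OF j] dUH by (intro indep_pair[OF Q ind]) auto
    have IU: "integrable Q (X (aU j))"
    proof (rule Bochner_Integration.integrable_bound[of _ "\<lambda>x. 1::real"])
      show "integrable Q (\<lambda>x. 1::real)" by simp
      show "X (aU j) \<in> borel_measurable Q" by (rule Um[OF j])
      show "AE x in Q. norm (X (aU j) x) \<le> norm (1::real)" using Uae[OF j] by eventually_elim auto
    qed
    have IH: "integrable Q (X (aH j))" using mgf_var[OF Q Hmgf[OF j]] by simp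
    show ?thesis using indep_var_lebesgue_integral[OF iv IU IH] Hmean[OF j] j by (simp add: Y_def)
  qed
  have YN: "Y 0 = X aN" by (simp add: Y_def[abs_def])
  from half_core[OF Q _ _ indY Ybm, of \<nu> d] Nmgf Nmean t \<nu> Ymean
  have R: "integrable Q (\<lambda>x. (\<Sum>j\<in>{1..K}. d j * Y j x)\<^sup>2 - (\<Sum>j\<in>{1..K}. (d j)\<^sup>2 * (Y j x)\<^sup>2) + 2 * Y 0 x * (\<Sum>j\<in>{1..K}. d j * Y j x) + (Y 0 x)\<^sup>2) \<and>
    mom_bd Q (\<lambda>x. ((\<Sum>j\<in>{1..K}. d j * Y j x)\<^sup>2 - (\<Sum>j\<in>{1..K}. (d j)\<^sup>2 * (Y j x)\<^sup>2) + 2 * Y 0 x * (\<Sum>j\<in>{1..K}. d j * Y j x) + (Y 0 x)\<^sup>2)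
        - (\<integral>x. (\<Sum>j\<in>{1..K}. d j * Y j x)\<^sup>2 - (\<Sum>j\<in>{1..K}. (d j)\<^sup>2 * (Y j x)\<^sup>2) + 2 * Y 0 x * (\<Sum>j\<in>{1..K}. d j * Y j x) + (Y 0 x)\<^sup>2 \<partial>Q))
      (3 * t\<^sup>2 * (\<Sum>j\<in>{1..K}. (d j)\<^sup>2) + 4 * \<nu> * (t * sqrt (\<Sum>j\<in>{1..K}. (d j)\<^sup>2)) + 2 * \<nu>\<^sup>2)"
    by (simp add: YN)
  have eq: "(\<lambda>x. (\<Sum>j\<in>{1..K}. d j * Y j x)\<^sup>2 - (\<Sum>j\<in>{1..K}. (d j)\<^sup>2 * (Y j x)\<^sup>2) + 2 * Y 0 x * (\<Sum>j\<in>{1..K}. d j * Y j x) + (Y 0 x)\<^sup>2) = HH"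
  proof -
    have s1: "(\<Sum>j\<in>{1..K}. d j * Y j x) = (\<Sum>k\<in>{1..K}. d k * (X (aU k) x * X (aH k) x))" for x
      by (intro sum.cong) (auto simp: Y_def)
    have s2: "(\<Sum>j\<in>{1..K}. (d j)\<^sup>2 * (Y j x)\<^sup>2) = (\<Sum>k\<in>{1..K}. (d k)\<^sup>2 * (X (aU k) x * X (aH k) x)\<^sup>2)" for x
      by (intro sum.cong) (auto simp: Y_def)
    show ?thesis unfolding HH_def s1 s2 YN by (rule refl)
  qed
  have eqp: "(\<Sum>j\<in>{1..K}. d j * Y j x)\<^sup>2 - (\<Sum>j\<in>{1..K}. (d j)\<^sup>2 * (Y j x)\<^sup>2) + 2 * Y 0 x * (\<Sum>j\<in>{1..K}. d j * Y j x) + (Y 0 x)\<^sup>2 = HH x" for x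
    using eq by (simp add: fun_eq_iff)
  show ?thesis using R by (simp only: eqp eq)
qed

lemma sum_offdiag:
  fixes a :: "nat \<Rightarrow> real" assumes I: "finite I"
  shows "(\<Sum>k\<in>I. \<Sum>l\<in>I - {k}. a k * a l) = (\<Sum>k\<in>I. a k)\<^sup>2 - (\<Sum>k\<in>I. (a k)\<^sup>2)"
proof -
  have "(\<Sum>k\<in>I. \<Sum>l\<in>I - {k}. a k * a l) = (\<Sum>k\<in>I. a k * (\<Sum>l\<in>I. a l) - (a k)\<^sup>2)"
  proof (intro sum.cong refl)
    fix k assume k: "k \<in> I"
    have "(\<Sum>l\<in>I - {k}. a k * a l) = a k * (\<Sum>l\<in>I - {k}. a l)" by (simp add: sum_distrib_left)
    also have "(\<Sum>l\<in>I - {k}. a l) = (\<Sum>l\<in>I. a l) - a k" using I k by (simp add: sum_diff1)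
    finally show "(\<Sum>l\<in>I - {k}. a k * a l) = a k * (\<Sum>l\<in>I. a l) - (a k)\<^sup>2" by (simp add: algebra_simps power2_eq_square)
  qed
  also have "\<dots> = (\<Sum>k\<in>I. a k)\<^sup>2 - (\<Sum>k\<in>I. (a k)\<^sup>2)"
    by (simp add: sum_subtractf sum_distrib_right[symmetric] power2_eq_square)
  finally show ?thesis .
qed

lemma Re_Nbar:
  fixes Hr Hi U :: "nat \<Rightarrow> nat \<Rightarrow> 'a \<Rightarrow> real" and Nr Ni :: "nat \<Rightarrow> 'a \<Rightarrow> real"
  assumes g0: "\<And>k. k \<in> {1..K} \<Longrightarrow> gfun K S f P k (f k (s k)) \<ge> 0"
  defines "d \<equiv> \<lambda>k. sqrt (gfun K S f P k (f k (s k)))"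
  shows "Re (Nbar K S f P Hr Hi Nr Ni U s m x) =
    ((\<Sum>k\<in>{1..K}. d k * (U k m x * Hr k m x))\<^sup>2
      - (\<Sum>k\<in>{1..K}. (d k)\<^sup>2 * (U k m x * Hr k m x)\<^sup>2)
      + 2 * Nr m x * (\<Sum>k\<in>{1..K}. d k * (U k m x * Hr k m x)) + (Nr m x)\<^sup>2)
  + ((\<Sum>k\<in>{1..K}. d k * (U k m x * Hi k m x))\<^sup>2
      - (\<Sum>k\<in>{1..K}. (d k)\<^sup>2 * (U k m x * Hi k m x)\<^sup>2)
      + 2 * Ni m x * (\<Sum>k\<in>{1..K}. d k * (U k m x * Hi k m x)) + (Ni m x)\<^sup>2)"
proof -
  define ar where "ar k = d k * (U k m x * Hr k m x)" for k
  define ai where "ai k = d k * (U k m x * Hi k m x)" for k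
  have sq: "k \<in> {1..K} \<Longrightarrow> sqrt (gfun K S f P k (f k (s k)) * gfun K S f P l (f l (s l))) = d k * d l" for k l
    by (simp add: d_def real_sqrt_mult)
  have T1: "Re (\<Sum>k\<in>{1..K}. \<Sum>l\<in>{1..K}-{k}.
        complex_of_real (sqrt (gfun K S f P k (f k (s k)) * gfun K S f P l (f l (s l))))
        * Hc Hr Hi k m x * cnj (Hc Hr Hi l m x) * complex_of_real (U k m x * U l m x))
      = (\<Sum>k\<in>{1..K}. \<Sum>l\<in>{1..K}-{k}. ar k * ar l) + (\<Sum>k\<in>{1..K}. \<Sum>l\<in>{1..K}-{k}. ai k * ai l)"
    by (simp add: Re_sum sum.distrib[symmetric] sq Hc_def ar_def ai_def algebra_simps)
  have T2: "Re (cnj (Nc Nr Ni m x) * (\<Sum>k=1..K. complex_of_real (sqrt (gfun K S f P k (f k (s k)))) * Hc Hr Hi k m x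
                     * complex_of_real (U k m x)))
      = Nr m x * (\<Sum>k\<in>{1..K}. ar k) + Ni m x * (\<Sum>k\<in>{1..K}. ai k)"
    by (simp add: Re_sum sum_distrib_left sum.distrib[symmetric] Hc_def Nc_def ar_def ai_def d_def algebra_simps)
  have T3: "(cmod (Nc Nr Ni m x))\<^sup>2 = (Nr m x)\<^sup>2 + (Ni m x)\<^sup>2"
    by (simp add: Nc_def cmod_power2)
  have E: "(\<Sum>k\<in>{1..K}. (d k)\<^sup>2 * (U k m x * Hr k m x)\<^sup>2) = (\<Sum>k\<in>{1..K}. (ar k)\<^sup>2)"
      "(\<Sum>k\<in>{1..K}. (d k)\<^sup>2 * (U k m x * Hi k m x)\<^sup>2) = (\<Sum>k\<in>{1..K}. (ai k)\<^sup>2)"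
    by (simp_all add: ar_def ai_def power_mult_distrib)
  have SS: "(\<Sum>k\<in>{1..K}. d k * (U k m x * Hr k m x)) = (\<Sum>k\<in>{1..K}. ar k)"
      "(\<Sum>k\<in>{1..K}. d k * (U k m x * Hi k m x)) = (\<Sum>k\<in>{1..K}. ai k)"
    by (simp_all add: ar_def ai_def)
  show ?thesis
    unfolding Nbar_def plus_complex.sel(1) Re_complex_of_real T1 T2 T3 E SS sum_offdiag[OF finite_atLeastAtMost]
    by (simp add: algebra_simps)
qed

lemma lim_sigma:
  assumes sF: "\<sigma>F \<ge> 0" and sN: "\<sigma>N \<ge> 0" and G: "G \<ge> 0"
    and h: "\<And>t \<nu>. t > \<sigma>F \<Longrightarrow> \<nu> > \<sigma>N \<Longrightarrow> mom_bd Q Y (6 * t\<^sup>2 * G + 8 * \<nu> * t * sqrt G + 4 * \<nu>\<^sup>2)"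
  shows "mom_bd Q Y (6 * \<sigma>F\<^sup>2 * G + 8 * \<sigma>N * \<sigma>F * sqrt G + 4 * \<sigma>N\<^sup>2)"
proof (rule mom_bd_limit)
  define c0 where "c0 = 6 * \<sigma>F\<^sup>2 * G + 8 * \<sigma>N * \<sigma>F * sqrt G + 4 * \<sigma>N\<^sup>2"
  show "6 * \<sigma>F\<^sup>2 * G + 8 * \<sigma>N * \<sigma>F * sqrt G + 4 * \<sigma>N\<^sup>2 \<ge> 0" using sF sN G by simp
  fix c' assume c': "c' > 6 * \<sigma>F\<^sup>2 * G + 8 * \<sigma>N * \<sigma>F * sqrt G + 4 * \<sigma>N\<^sup>2"
  define Kc where "Kc = 6 * G * (2 * \<sigma>F + 1) + 8 * sqrt G * (\<sigma>F + \<sigma>N + 1) + 4 * (2 * \<sigma>N + 1)"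
  have Kc: "Kc \<ge> 0" using sF sN G by (simp add: Kc_def)
  define \<delta> where "\<delta> = min 1 ((c' - c0) / (Kc + 1))"
  have cc: "c' - c0 > 0" using c' by (simp add: c0_def)
  have d0: "\<delta> > 0" using cc Kc by (simp add: \<delta>_def)
  have d1: "\<delta> \<le> 1" by (simp add: \<delta>_def)
  have d2: "\<delta> * Kc \<le> c' - c0"
  proof -
    have "\<delta> \<le> (c' - c0) / (Kc + 1)" by (simp add: \<delta>_def)
    then have "\<delta> * Kc \<le> (c' - c0) / (Kc + 1) * Kc" using Kc by (intro mult_right_mono) auto
    also have "\<dots> \<le> c' - c0" using Kc cc by (simp add: field_simps)
    finally show ?thesis .
  qed
  have dd: "\<delta>\<^sup>2 \<le> \<delta>" using d0 d1 by (simp add: power2_eq_square mult_le_cancel_left1)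
  have "mom_bd Q Y (6 * (\<sigma>F + \<delta>)\<^sup>2 * G + 8 * (\<sigma>N + \<delta>) * (\<sigma>F + \<delta>) * sqrt G + 4 * (\<sigma>N + \<delta>)\<^sup>2)"
    using d0 by (intro h) auto
  moreover have "6 * (\<sigma>F + \<delta>)\<^sup>2 * G + 8 * (\<sigma>N + \<delta>) * (\<sigma>F + \<delta>) * sqrt G + 4 * (\<sigma>N + \<delta>)\<^sup>2 \<le> c'"
  proof -
    have e: "6 * (\<sigma>F + \<delta>)\<^sup>2 * G + 8 * (\<sigma>N + \<delta>) * (\<sigma>F + \<delta>) * sqrt G + 4 * (\<sigma>N + \<delta>)\<^sup>2
      = c0 + (6 * G * (2 * \<sigma>F * \<delta> + \<delta>\<^sup>2) + 8 * sqrt G * ((\<sigma>F + \<sigma>N) * \<delta> + \<delta>\<^sup>2) + 4 * (2 * \<sigma>N * \<delta> + \<delta>\<^sup>2))"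
      by (simp add: c0_def power2_eq_square algebra_simps)
    have "6 * G * (2 * \<sigma>F * \<delta> + \<delta>\<^sup>2) \<le> 6 * G * (2 * \<sigma>F * \<delta> + \<delta>)" using dd G by (intro mult_left_mono) auto
    moreover have "8 * sqrt G * ((\<sigma>F + \<sigma>N) * \<delta> + \<delta>\<^sup>2) \<le> 8 * sqrt G * ((\<sigma>F + \<sigma>N) * \<delta> + \<delta>)" using dd G by (intro mult_left_mono) auto
    moreover have "4 * (2 * \<sigma>N * \<delta> + \<delta>\<^sup>2) \<le> 4 * (2 * \<sigma>N * \<delta> + \<delta>)" using dd by simp
    moreover have "6 * G * (2 * \<sigma>F * \<delta> + \<delta>) + 8 * sqrt G * ((\<sigma>F + \<sigma>N) * \<delta> + \<delta>) + 4 * (2 * \<sigma>N * \<delta> + \<delta>) = \<delta> * Kc"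
      by (simp add: Kc_def algebra_simps)
    ultimately show ?thesis unfolding e using d2 by linarith
  qed
  ultimately show "mom_bd Q Y c'" by (rule mom_bd_mono)
qed

lemma g_bounds:
  assumes k: "k \<in> {1..K}" and sk: "s k \<in> S k" and bd: "bounded (f k ` S k)" and P: "P > 0" and D: "Delta K S f > 0"
  shows "0 \<le> gfun K S f P k (f k (s k)) \<and> gfun K S f P k (f k (s k)) \<le> P / Delta K S f * (phi_max S f k - phi_min S f k)"
proof -
  have lo: "phi_min S f k \<le> f k (s k)" unfolding phi_min_def
    using sk bounded_imp_bdd_below[OF bd] by (intro cInf_lower) auto
  have hi: "f k (s k) \<le> phi_max S f k" unfolding phi_max_def
    using sk bounded_imp_bdd_above[OF bd] by (intro cSup_upper) auto
  have pd: "P / Delta K S f > 0" using P D by simp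
  have "0 \<le> P / Delta K S f * (f k (s k) - phi_min S f k)" using lo pd by (intro mult_nonneg_nonneg) auto
  moreover have "P / Delta K S f * (f k (s k) - phi_min S f k) \<le> P / Delta K S f * (phi_max S f k - phi_min S f k)"
    using hi pd by (intro mult_left_mono) auto
  ultimately show ?thesis unfolding gfun_def by blast
qed

theorem lemma2:
  fixes \<Omega> :: "'a measure"
    and K M :: nat and P \<sigma>F \<sigma>N :: real
    and Hr Hi U :: "nat \<Rightarrow> nat \<Rightarrow> 'a \<Rightarrow> real"
    and Nr Ni :: "nat \<Rightarrow> 'a \<Rightarrow> real"
    and S :: "nat \<Rightarrow> real set" and f :: "nat \<Rightarrow> real \<Rightarrow> real"
  assumes prob: "prob_space \<Omega>"
    and K1: "K \<ge> 1" and M1: "M \<ge> 1"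
    and Ppos: "P > 0" and sF: "\<sigma>F \<ge> 0" and sN: "\<sigma>N \<ge> 0"
    and H_sg: "\<And>k m. k \<in> {1..K} \<Longrightarrow> m \<in> {1..M} \<Longrightarrow>
        subgaussian \<Omega> (Hr k m) \<and> subgaussian \<Omega> (Hi k m)"
    and H_mean: "\<And>k m. k \<in> {1..K} \<Longrightarrow> m \<in> {1..M} \<Longrightarrow>
        integral\<^sup>L \<Omega> (Hr k m) = 0 \<and> integral\<^sup>L \<Omega> (Hi k m) = 0"
    and H_var: "\<And>k m. k \<in> {1..K} \<Longrightarrow> m \<in> {1..M} \<Longrightarrow>
        integrable \<Omega> (\<lambda>x. (Hr k m x)\<^sup>2) \<and> integrable \<Omega> (\<lambda>x. (Hi k m x)\<^sup>2) \<and>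
        integral\<^sup>L \<Omega> (\<lambda>x. (Hr k m x)\<^sup>2) = 1 \<and> integral\<^sup>L \<Omega> (\<lambda>x. (Hi k m x)\<^sup>2) = 1"
    and H_tau: "\<And>k m. k \<in> {1..K} \<Longrightarrow> m \<in> {1..M} \<Longrightarrow>
        max (subgauss_norm \<Omega> (Hr k m)) (subgauss_norm \<Omega> (Hi k m)) \<le> \<sigma>F"
    and N_sg: "\<And>m. m \<in> {1..M} \<Longrightarrow> subgaussian \<Omega> (Nr m) \<and> subgaussian \<Omega> (Ni m)"
    and N_mean: "\<And>m. m \<in> {1..M} \<Longrightarrow>
        integral\<^sup>L \<Omega> (Nr m) = 0 \<and> integral\<^sup>L \<Omega> (Ni m) = 0"
    and N_tau: "\<And>m. m \<in> {1..M} \<Longrightarrow>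
        max (subgauss_norm \<Omega> (Nr m)) (subgauss_norm \<Omega> (Ni m)) \<le> \<sigma>N"
    and U_rv: "\<And>k m. k \<in> {1..K} \<Longrightarrow> m \<in> {1..M} \<Longrightarrow> U k m \<in> borel_measurable \<Omega>"
    and U_dist: "\<And>k m. k \<in> {1..K} \<Longrightarrow> m \<in> {1..M} \<Longrightarrow>
        measure \<Omega> {x \<in> space \<Omega>. U k m x = 1} = 1/2 \<and>
        measure \<Omega> {x \<in> space \<Omega>. U k m x = -1} = 1/2"
    and indep: "prob_space.indep_vars \<Omega> (\<lambda>_. borel) (rv_family Hr Hi Nr Ni U) (rv_index K M)"
    and S_closed: "\<And>k. k \<in> {1..K} \<Longrightarrow> closed (S k)"
    and f_bdd: "\<And>k. k \<in> {1..K} \<Longrightarrow> bounded (f k ` S k)"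
    and f_meas: "\<And>k. k \<in> {1..K} \<Longrightarrow> f k \<in> borel_measurable (restrict_space borel (S k))"
    and Delta_pos: "Delta K S f > 0"
  shows "(\<forall>k\<in>{1..K}. \<forall>m\<in>{1..M}.
            subexponential \<Omega> (\<lambda>x. (Hr k m x)\<^sup>2 - 1) \<and>
            subexponential \<Omega> (\<lambda>x. (Hi k m x)\<^sup>2 - 1) \<and>
            subexp_norm \<Omega> (\<lambda>x. (Hr k m x)\<^sup>2 - 1) \<le> ereal (2 * \<sigma>F\<^sup>2) \<and>
            subexp_norm \<Omega> (\<lambda>x. (Hi k m x)\<^sup>2 - 1) \<le> ereal (2 * \<sigma>F\<^sup>2))
       \<and> (\<forall>s::nat \<Rightarrow> real. (\<forall>k\<in>{1..K}. s k \<in> S k) \<longrightarrow> (\<forall>m\<in>{1..M}.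
            let X = (\<lambda>x. Re (Nbar K S f P Hr Hi Nr Ni U s m x)) in
            subexponential \<Omega> X \<and>
            subexp_norm \<Omega> (\<lambda>x. X x - integral\<^sup>L \<Omega> X) \<le>
              ereal (6 * \<sigma>F\<^sup>2 * rel_spread K S f P
                     + 8 * \<sigma>N * \<sigma>F * sqrt (rel_spread K S f P) + 4 * \<sigma>N\<^sup>2)))"
proof -
  interpret prob_space \<Omega> by (rule prob)
  have gen1: "mom_bd \<Omega> (\<lambda>x. (W x)\<^sup>2 - 1) (2 * \<sigma>F\<^sup>2)"
    if sg: "subgaussian \<Omega> W" and m0: "integral\<^sup>L \<Omega> W = 0" and v1: "(\<integral>x. (W x)\<^sup>2 \<partial>\<Omega>) = 1"
      and nb: "subgauss_norm \<Omega> W \<le> \<sigma>F" for W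
  proof (rule mom_bd_limit)
    show "2 * \<sigma>F\<^sup>2 \<ge> 0" by simp
    fix c' assume c': "c' > 2 * \<sigma>F\<^sup>2"
    define t where "t = sqrt (c' / 2)"
    have c'0: "c' / 2 > \<sigma>F\<^sup>2" using c' by simp
    have s0: "\<sigma>F\<^sup>2 \<ge> 0" by simp
    have "c' / 2 > 0" using c'0 s0 by linarith
    then have tpos: "t > 0" by (simp add: t_def)
    have tt: "\<sigma>F < t"
    proof -
      have "sqrt (\<sigma>F\<^sup>2) < sqrt (c' / 2)" using c'0 by (rule real_sqrt_less_mono)
      then show ?thesis using sF by (simp add: t_def)
    qed
    have W: "mgf_bd \<Omega> W t" by (rule sg_to_mgf[OF sg m0 nb tt])
    from mgf_sq[OF prob W tpos] have "mom_bd \<Omega> (\<lambda>x. (W x)\<^sup>2 - (\<integral>x. (W x)\<^sup>2 \<partial>\<Omega>)) (2 * t\<^sup>2)" by simp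
    moreover have "2 * t\<^sup>2 = c'" using \<open>c' / 2 > 0\<close> by (simp add: t_def)
    ultimately show "mom_bd \<Omega> (\<lambda>x. (W x)\<^sup>2 - 1) c'" using v1 by simp
  qed
  have part1: "\<forall>k\<in>{1..K}. \<forall>m\<in>{1..M}.
            subexponential \<Omega> (\<lambda>x. (Hr k m x)\<^sup>2 - 1) \<and>
            subexponential \<Omega> (\<lambda>x. (Hi k m x)\<^sup>2 - 1) \<and>
            subexp_norm \<Omega> (\<lambda>x. (Hr k m x)\<^sup>2 - 1) \<le> ereal (2 * \<sigma>F\<^sup>2) \<and>
            subexp_norm \<Omega> (\<lambda>x. (Hi k m x)\<^sup>2 - 1) \<le> ereal (2 * \<sigma>F\<^sup>2)"
  proof (intro ballI)
    fix k m assume k: "k \<in> {1..K}" and m: "m \<in> {1..M}"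
    have a: "mom_bd \<Omega> (\<lambda>x. (Hr k m x)\<^sup>2 - 1) (2 * \<sigma>F\<^sup>2)"
      using H_sg[OF k m] H_mean[OF k m] H_var[OF k m] H_tau[OF k m] by (intro gen1) auto
    have b: "mom_bd \<Omega> (\<lambda>x. (Hi k m x)\<^sup>2 - 1) (2 * \<sigma>F\<^sup>2)"
      using H_sg[OF k m] H_mean[OF k m] H_var[OF k m] H_tau[OF k m] by (intro gen1) auto
    show "subexponential \<Omega> (\<lambda>x. (Hr k m x)\<^sup>2 - 1) \<and>
            subexponential \<Omega> (\<lambda>x. (Hi k m x)\<^sup>2 - 1) \<and>
            subexp_norm \<Omega> (\<lambda>x. (Hr k m x)\<^sup>2 - 1) \<le> ereal (2 * \<sigma>F\<^sup>2) \<and>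
            subexp_norm \<Omega> (\<lambda>x. (Hi k m x)\<^sup>2 - 1) \<le> ereal (2 * \<sigma>F\<^sup>2)"
      using mom_bd_subexp[OF a] mom_bd_subexp[OF b] by auto
  qed
  have part2: "\<forall>s::nat \<Rightarrow> real. (\<forall>k\<in>{1..K}. s k \<in> S k) \<longrightarrow> (\<forall>m\<in>{1..M}.
            let X = (\<lambda>x. Re (Nbar K S f P Hr Hi Nr Ni U s m x)) in
            subexponential \<Omega> X \<and>
            subexp_norm \<Omega> (\<lambda>x. X x - integral\<^sup>L \<Omega> X) \<le>
              ereal (6 * \<sigma>F\<^sup>2 * rel_spread K S f P
                     + 8 * \<sigma>N * \<sigma>F * sqrt (rel_spread K S f P) + 4 * \<sigma>N\<^sup>2))"
  proof (intro allI impI ballI)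
    fix s :: "nat \<Rightarrow> real" and m assume s: "\<forall>k\<in>{1..K}. s k \<in> S k" and m: "m \<in> {1..M}"
    define g where "g k = gfun K S f P k (f k (s k))" for k
    define d where "d k = sqrt (g k)" for k
    define G where "G = (\<Sum>k\<in>{1..K}. (d k)\<^sup>2)"
    have gb: "0 \<le> g k \<and> g k \<le> P / Delta K S f * (phi_max S f k - phi_min S f k)" if k: "k \<in> {1..K}" for k
      unfolding g_def using s k f_bdd[OF k] Ppos Delta_pos by (intro g_bounds) auto
    have Gg: "G = (\<Sum>k\<in>{1..K}. g k)" unfolding G_def d_def using gb by (intro sum.cong) auto
    have G0: "G \<ge> 0" unfolding G_def by (simp add: sum_nonneg)
    have GD: "G \<le> rel_spread K S f P"
    proof -
      have "G \<le> (\<Sum>k\<in>{1..K}. P / Delta K S f * (phi_max S f k - phi_min S f k))"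
        unfolding Gg using gb by (intro sum_mono) auto
      also have "\<dots> = rel_spread K S f P"
        unfolding rel_spread_def Delta_bar_def by (simp add: sum_distrib_left sum_divide_distrib)
      finally show ?thesis .
    qed
    define X where "X x = Re (Nbar K S f P Hr Hi Nr Ni U s m x)" for x
    define Xr where "Xr x = (\<Sum>k\<in>{1..K}. d k * (U k m x * Hr k m x))\<^sup>2
      - (\<Sum>k\<in>{1..K}. (d k)\<^sup>2 * (U k m x * Hr k m x)\<^sup>2)
      + 2 * Nr m x * (\<Sum>k\<in>{1..K}. d k * (U k m x * Hr k m x)) + (Nr m x)\<^sup>2" for x
    define Xi where "Xi x = (\<Sum>k\<in>{1..K}. d k * (U k m x * Hi k m x))\<^sup>2
      - (\<Sum>k\<in>{1..K}. (d k)\<^sup>2 * (U k m x * Hi k m x)\<^sup>2)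
      + 2 * Ni m x * (\<Sum>k\<in>{1..K}. d k * (U k m x * Hi k m x)) + (Ni m x)\<^sup>2" for x
    have Xeq: "X x = Xr x + Xi x" for x
      unfolding X_def Xr_def Xi_def d_def g_def by (rule Re_Nbar) (use gb in \<open>auto simp: g_def\<close>)
    let ?RV = "rv_family Hr Hi Nr Ni U"
    have inU: "\<And>k. k \<in> {1..K} \<Longrightarrow> IU k m \<in> rv_index K M" using m by (auto simp: rv_index_def)
    have inHr: "\<And>k. k \<in> {1..K} \<Longrightarrow> IHr k m \<in> rv_index K M" using m by (auto simp: rv_index_def)
    have inHi: "\<And>k. k \<in> {1..K} \<Longrightarrow> IHi k m \<in> rv_index K M" using m by (auto simp: rv_index_def)
    have inNr: "INr m \<in> rv_index K M" using m by (auto simp: rv_index_def)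
    have inNi: "INi m \<in> rv_index K M" using m by (auto simp: rv_index_def)
    have injU: "inj_on (\<lambda>k. IU k m) {1..K}" by (auto simp: inj_on_def)
    have injHr: "inj_on (\<lambda>k. IHr k m) {1..K}" by (auto simp: inj_on_def)
    have injHi: "inj_on (\<lambda>k. IHi k m) {1..K}" by (auto simp: inj_on_def)
    have Um: "\<And>k. k \<in> {1..K} \<Longrightarrow> ?RV (IU k m) \<in> borel_measurable \<Omega>" using U_rv m by simp
    have Uae: "\<And>k. k \<in> {1..K} \<Longrightarrow> AE x in \<Omega>. ?RV (IU k m) x = 1 \<or> ?RV (IU k m) x = -1"
      using U_ae[OF prob U_rv U_dist] m by simp
    have Hrmean: "\<And>k. k \<in> {1..K} \<Longrightarrow> (\<integral>x. ?RV (IHr k m) x \<partial>\<Omega>) = 0" using H_mean m by simp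
    have Himean: "\<And>k. k \<in> {1..K} \<Longrightarrow> (\<integral>x. ?RV (IHi k m) x \<partial>\<Omega>) = 0" using H_mean m by simp
    have Nrmean: "(\<integral>x. ?RV (INr m) x \<partial>\<Omega>) = 0" using N_mean m by simp
    have Nimean: "(\<integral>x. ?RV (INi m) x \<partial>\<Omega>) = 0" using N_mean m by simp
    have bound_t: "integrable \<Omega> Xr \<and> integrable \<Omega> Xi \<and>
        mom_bd \<Omega> (\<lambda>x. X x - (\<integral>x. X x \<partial>\<Omega>)) (6 * t\<^sup>2 * G + 8 * \<nu> * t * sqrt G + 4 * \<nu>\<^sup>2)"
      if t: "t > \<sigma>F" and \<nu>: "\<nu> > \<sigma>N" for t \<nu>
    proof -
      have tp: "t > 0" using t sF by simp
      have \<nu>p: "\<nu> > 0" using \<nu> sN by simp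
      have Hrmgf: "mgf_bd \<Omega> (?RV (IHr k m)) t" if k: "k \<in> {1..K}" for k
        using H_sg[OF k m] H_mean[OF k m] H_tau[OF k m] t by (auto intro!: sg_to_mgf[where \<sigma> = \<sigma>F])
      have Himgf: "mgf_bd \<Omega> (?RV (IHi k m)) t" if k: "k \<in> {1..K}" for k
        using H_sg[OF k m] H_mean[OF k m] H_tau[OF k m] t by (auto intro!: sg_to_mgf[where \<sigma> = \<sigma>F])
      have Nrmgf: "mgf_bd \<Omega> (?RV (INr m)) \<nu>"
        using N_sg[OF m] N_mean[OF m] N_tau[OF m] \<nu> by (auto intro!: sg_to_mgf[where \<sigma> = \<sigma>N])
      have Nimgf: "mgf_bd \<Omega> (?RV (INi m)) \<nu>"
        using N_sg[OF m] N_mean[OF m] N_tau[OF m] \<nu> by (auto intro!: sg_to_mgf[where \<sigma> = \<sigma>N])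
      from half_apply[OF prob indep inU inHr inNr injU injHr _ _ _ Um Uae Hrmgf Hrmean Nrmgf Nrmean tp \<nu>p, of d]
      have R: "integrable \<Omega> Xr \<and> mom_bd \<Omega> (\<lambda>x. Xr x - (\<integral>x. Xr x \<partial>\<Omega>)) (3 * t\<^sup>2 * G + 4 * \<nu> * (t * sqrt G) + 2 * \<nu>\<^sup>2)"
        by (simp add: Xr_def[abs_def] G_def)
      from half_apply[OF prob indep inU inHi inNi injU injHi _ _ _ Um Uae Himgf Himean Nimgf Nimean tp \<nu>p, of d]
      have I: "integrable \<Omega> Xi \<and> mom_bd \<Omega> (\<lambda>x. Xi x - (\<integral>x. Xi x \<partial>\<Omega>)) (3 * t\<^sup>2 * G + 4 * \<nu> * (t * sqrt G) + 2 * \<nu>\<^sup>2)"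
        by (simp add: Xi_def[abs_def] G_def)
      have EX: "(\<integral>x. X x \<partial>\<Omega>) = (\<integral>x. Xr x \<partial>\<Omega>) + (\<integral>x. Xi x \<partial>\<Omega>)"
        unfolding Xeq using R I by simp
      have "mom_bd \<Omega> (\<lambda>x. (Xr x - (\<integral>x. Xr x \<partial>\<Omega>)) + (Xi x - (\<integral>x. Xi x \<partial>\<Omega>)))
          ((3 * t\<^sup>2 * G + 4 * \<nu> * (t * sqrt G) + 2 * \<nu>\<^sup>2) + (3 * t\<^sup>2 * G + 4 * \<nu> * (t * sqrt G) + 2 * \<nu>\<^sup>2))"
        using R I by (intro mom_bd_add) auto
      then have "mom_bd \<Omega> (\<lambda>x. X x - (\<integral>x. X x \<partial>\<Omega>)) ((3 * t\<^sup>2 * G + 4 * \<nu> * (t * sqrt G) + 2 * \<nu>\<^sup>2) + (3 * t\<^sup>2 * G + 4 * \<nu> * (t * sqrt G) + 2 * \<nu>\<^sup>2))"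
      proof (rule mom_bd_cong)
        have [measurable]: "Xr \<in> borel_measurable \<Omega>" "Xi \<in> borel_measurable \<Omega>" using R I by auto
        show "(\<lambda>x. X x - (\<integral>x. X x \<partial>\<Omega>)) \<in> borel_measurable \<Omega>" unfolding Xeq by measurable
        fix x show "X x - (\<integral>x. X x \<partial>\<Omega>) = (Xr x - (\<integral>x. Xr x \<partial>\<Omega>)) + (Xi x - (\<integral>x. Xi x \<partial>\<Omega>))"
          unfolding EX by (simp add: Xeq)
      qed
      then have "mom_bd \<Omega> (\<lambda>x. X x - (\<integral>x. X x \<partial>\<Omega>)) (6 * t\<^sup>2 * G + 8 * \<nu> * t * sqrt G + 4 * \<nu>\<^sup>2)"
        by (rule mom_bd_mono) (simp add: algebra_simps)
      then show ?thesis using R I by blast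
    qed
    have mX0: "mom_bd \<Omega> (\<lambda>x. X x - (\<integral>x. X x \<partial>\<Omega>)) (6 * \<sigma>F\<^sup>2 * G + 8 * \<sigma>N * \<sigma>F * sqrt G + 4 * \<sigma>N\<^sup>2)"
      by (rule lim_sigma[OF sF sN G0]) (use bound_t in blast)
    have mX: "mom_bd \<Omega> (\<lambda>x. X x - (\<integral>x. X x \<partial>\<Omega>)) (6 * \<sigma>F\<^sup>2 * rel_spread K S f P
                     + 8 * \<sigma>N * \<sigma>F * sqrt (rel_spread K S f P) + 4 * \<sigma>N\<^sup>2)"
    proof (rule mom_bd_mono[OF mX0])
      have "6 * \<sigma>F\<^sup>2 * G \<le> 6 * \<sigma>F\<^sup>2 * rel_spread K S f P" using GD by (intro mult_left_mono) auto
      moreover have "8 * \<sigma>N * \<sigma>F * sqrt G \<le> 8 * \<sigma>N * \<sigma>F * sqrt (rel_spread K S f P)"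
        using GD sF sN by (intro mult_left_mono) auto
      ultimately show "6 * \<sigma>F\<^sup>2 * G + 8 * \<sigma>N * \<sigma>F * sqrt G + 4 * \<sigma>N\<^sup>2 \<le> 6 * \<sigma>F\<^sup>2 * rel_spread K S f P
                     + 8 * \<sigma>N * \<sigma>F * sqrt (rel_spread K S f P) + 4 * \<sigma>N\<^sup>2" by linarith
    qed
    have IX: "integrable \<Omega> X" unfolding Xeq[abs_def] using bound_t[of "\<sigma>F + 1" "\<sigma>N + 1"] by simp
    have "mom_bd \<Omega> (\<lambda>x. (X x - (\<integral>x. X x \<partial>\<Omega>)) + (\<integral>x. X x \<partial>\<Omega>)) (6 * \<sigma>F\<^sup>2 * rel_spread K S f P
                     + 8 * \<sigma>N * \<sigma>F * sqrt (rel_spread K S f P) + 4 * \<sigma>N\<^sup>2 + \<bar>\<integral>x. X x \<partial>\<Omega>\<bar>)"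
      by (intro mom_bd_add mX mom_bd_const prob)
    then have "subexponential \<Omega> (\<lambda>x. (X x - (\<integral>x. X x \<partial>\<Omega>)) + (\<integral>x. X x \<partial>\<Omega>))"
      using mom_bd_subexp by blast
    then have SX: "subexponential \<Omega> X" by simp
    have NX: "subexp_norm \<Omega> (\<lambda>x. X x - (\<integral>x. X x \<partial>\<Omega>)) \<le> ereal (6 * \<sigma>F\<^sup>2 * rel_spread K S f P
                     + 8 * \<sigma>N * \<sigma>F * sqrt (rel_spread K S f P) + 4 * \<sigma>N\<^sup>2)"
      using mom_bd_subexp[OF mX] by blast
    show "let X = (\<lambda>x. Re (Nbar K S f P Hr Hi Nr Ni U s m x)) in
            subexponential \<Omega> X \<and>
            subexp_norm \<Omega> (\<lambda>x. X x - integral\<^sup>L \<Omega> X) \<le>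
              ereal (6 * \<sigma>F\<^sup>2 * rel_spread K S f P
                     + 8 * \<sigma>N * \<sigma>F * sqrt (rel_spread K S f P) + 4 * \<sigma>N\<^sup>2)"
      using SX NX unfolding Let_def X_def[abs_def] by simp
  qed
  show ?thesis using part1 part2 by blast
qed

end
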